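(* Fix one of the types I–V with data $J$, $(\phi_j)$, $(n_j)$ as in the context, and let $H$ be continuous on $\mathbb{R}$. Let $i\in J$. Then there exists a unique local solution $\mathbf{x}(s)$ (defined for $s$ near $0$) of $$\mathbf{x}''(s)^\perp\cdot\mathbf{x}'(s)+\sum_{j\in J}\frac{n_j\,\mathbf{e}(\phi_j)\cdot\mathbf{x}'(s)}{\mathbf{e}(\phi_j)^\perp\cdot\mathbf{x}(s)}=(n-1)H(s),\qquad \|\mathbf{x}'(s)\|^2=1,$$ satisfying the initial conditions $$\mathbf{e}(\phi_i)^\perp\cdot\mathbf{x}(0)=0,\qquad \mathbf{x}(0)\neq\mathbf{0},\qquad \mathbf{x}'(0)=\mathbf{e}\!\left(\phi_i+\tfrac{\pi}{2}\right).$$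
   Context: For $\mathbf{a}=(a,b)\in\mathbb{R}^2$ write $\mathbf{a}^\perp=(-b,a)$; $\mathbf{e}(\phi)=(\cos\phi,\sin\phi)$, $\mathbf{e}(\phi)^\perp=(-\sin\phi,\cos\phi)$. Type data ($\sum_j n_j=n-2$): Type I: $J=\{0\}$, $\phi_0=0$, $n_0=n-2$, $n\ge3$. Type II: $J=\{0,1\}$, $\phi_0=0$, $\phi_1=\pi/2$, $n_0=m$, $n_1=\ell$ ($n=\ell+m+2$, $\ell,m\in\mathbb{N}$). Type III: $J=\{-1,0,1\}$, $\phi_j=j\pi/3$, $n_j\equiv c$ with $c\in\{1,2,4,8\}$ ($n=5,8,14,26$). Type IV: $J=\{-1,0,1,2\}$, $\phi_j=j\pi/4$, $n_{\pm1}=\ell$, $n_0=n_2=k$, $(k,\ell)\in\{(2,2),(5,4),(9,6),(m-2,1),(2m-3,2),(4m-5,4)\}$. Type V: $J=\{-2,\dots,3\}$, $\phi_j=j\pi/6$, $n_j\equiv c$ with $c\in\{1,2\}$. The equation is singular where $\mathbf{e}(\phi_j)^\perp\cdot\mathbf{x}=0$ for some $j$; the initial point lies on such a line. *)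

theory Defs
  imports "HOL-Analysis.Analysis"
begin

definition evec :: "real \<Rightarrow> real \<times> real" where
  "evec \<phi> = (cos \<phi>, sin \<phi>)"

definition perp :: "real \<times> real \<Rightarrow> real \<times> real" where
  "perp v = (- snd v, fst v)"

definition type_data :: "int set \<Rightarrow> (int \<Rightarrow> real) \<Rightarrow> (int \<Rightarrow> nat) \<Rightarrow> nat \<Rightarrow> bool" where
  "type_data J \<phi> nj n \<longleftrightarrow>
     n = 2 + (\<Sum>j\<in>J. nj j) \<and>
     ( \<comment> \<open>Type I\<close>
       (J = {0} \<and> \<phi> 0 = 0 \<and> n \<ge> 3)
     \<or> \<comment> \<open>Type II\<close>
       (J = {0, 1} \<and> \<phi> 0 = 0 \<and> \<phi> 1 = pi / 2 \<and> nj 0 \<ge> 1 \<and> nj 1 \<ge> 1)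
     \<or> \<comment> \<open>Type III\<close>
       (J = {-1, 0, 1} \<and> (\<forall>j\<in>J. \<phi> j = real_of_int j * pi / 3) \<and>
        (\<exists>c\<in>{1, 2, 4, 8}. \<forall>j\<in>J. nj j = c))
     \<or> \<comment> \<open>Type IV\<close>
       (J = {-1, 0, 1, 2} \<and> (\<forall>j\<in>J. \<phi> j = real_of_int j * pi / 4) \<and>
        (\<exists>k l. nj (-1) = l \<and> nj 1 = l \<and> nj 0 = k \<and> nj 2 = k \<and>
           ((k, l) \<in> {(2, 2), (5, 4), (9, 6)} \<or>
            (k \<ge> 1 \<and> (\<exists>m::int. (int k, int l) \<in> {(m - 2, 1), (2 * m - 3, 2), (4 * m - 5, 4)})))))
     \<or> \<comment> \<open>Type V\<close>
       (J = {-2..3} \<and> (\<forall>j\<in>J. \<phi> j = real_of_int j * pi / 6) \<and>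
        (\<exists>c\<in>{1, 2}. \<forall>j\<in>J. nj j = c)))"

definition is_local_solution ::
  "int set \<Rightarrow> (int \<Rightarrow> real) \<Rightarrow> (int \<Rightarrow> nat) \<Rightarrow> nat \<Rightarrow> (real \<Rightarrow> real) \<Rightarrow> int \<Rightarrow>
   real \<times> real \<Rightarrow> real \<Rightarrow> (real \<Rightarrow> real \<times> real) \<Rightarrow> bool" where
  "is_local_solution J \<phi> nj n H i x0 \<epsilon> x \<longleftrightarrow>
     \<epsilon> > 0 \<and> x 0 = x0 \<and>
     (\<exists>x' x''.
        (\<forall>s\<in>{-\<epsilon><..<\<epsilon>}. (x has_vector_derivative x' s) (at s) \<and>
                              (x' has_vector_derivative x'' s) (at s)) \<and>
        continuous_on {-\<epsilon><..<\<epsilon>} x'' \<and>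
        x' 0 = evec (\<phi> i + pi / 2) \<and>
        (\<forall>s\<in>{-\<epsilon><..<\<epsilon>}. (norm (x' s))\<^sup>2 = 1) \<and>
        (\<forall>s\<in>{-\<epsilon><..<\<epsilon>}. s \<noteq> 0 \<longrightarrow>
           (\<forall>j\<in>J. perp (evec (\<phi> j)) \<bullet> x s \<noteq> 0) \<and>
           perp (x'' s) \<bullet> x' s
             + (\<Sum>j\<in>J. real (nj j) * (evec (\<phi> j) \<bullet> x' s) / (perp (evec (\<phi> j)) \<bullet> x s))
             = (real n - 1) * H s))"

end

theory Submission
  imports Defs "HOL-Analysis.Analysis"
begin

lemma deriv_bound_real:
  fixes f f' :: "real \<Rightarrow> real"
  assumes "\<And>t. t \<in> {min a b..max a b} \<Longrightarrow> (f has_real_derivative f' t) (at t within {min a b..max a b})"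
      and "\<And>t. t \<in> {min a b..max a b} \<Longrightarrow> \<bar>f' t\<bar> \<le> B"
  shows "\<bar>f b - f a\<bar> \<le> B * \<bar>b - a\<bar>"
  using field_differentiable_bound[of "{min a b..max a b}" f f' B b a] assms by auto

lemma cos_lip: fixes a b :: real shows "\<bar>cos a - cos b\<bar> \<le> \<bar>a - b\<bar>"
proof -
  have "\<bar>cos a - cos b\<bar> \<le> 1 * \<bar>a - b\<bar>"
    by (rule deriv_bound_real[where f'="\<lambda>t. - sin t"])
       (auto intro!: derivative_eq_intros)
  thus ?thesis by simp
qed

lemma sin_lip: fixes a b :: real shows "\<bar>sin a - sin b\<bar> \<le> \<bar>a - b\<bar>"
proof -
  have "\<bar>sin a - sin b\<bar> \<le> 1 * \<bar>a - b\<bar>"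
    by (rule deriv_bound_real[where f'="\<lambda>t. cos t"])
       (auto intro!: derivative_eq_intros)
  thus ?thesis by simp
qed

lemma one_minus_cos_le: fixes x :: real shows "1 - cos x \<le> x\<^sup>2 / 2"
proof -
  have c: "cos x = 1 - 2 * (sin (x/2))\<^sup>2" using cos_double_sin[of "x/2"] by simp
  have "(sin (x/2))\<^sup>2 \<le> (x/2)\<^sup>2"
    using abs_sin_x_le_abs_x[of "x/2"] by (metis abs_ge_zero power2_abs power_mono)
  thus ?thesis using c by (simp add: power_divide)
qed

lemma one_minus_cos_ge: fixes x :: real shows "0 \<le> 1 - cos x" by simp

lemma sinx_lip:
  fixes a b M :: real
  assumes "\<bar>a\<bar> \<le> M" "\<bar>b\<bar> \<le> M"
  shows "\<bar>(sin a - a) - (sin b - b)\<bar> \<le> M\<^sup>2 / 2 * \<bar>a - b\<bar>"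
proof (rule deriv_bound_real[where f="\<lambda>t. sin t - t" and f'="\<lambda>t. cos t - 1"])
  fix t assume t: "t \<in> {min b a..max b a}"
  show "((\<lambda>t. sin t - t) has_real_derivative cos t - 1) (at t within {min b a..max b a})"
    by (auto intro!: derivative_eq_intros)
  have "\<bar>t\<bar> \<le> M" using t assms by auto
  hence "t\<^sup>2 \<le> M\<^sup>2" by (metis abs_ge_zero power2_abs power_mono)
  thus "\<bar>cos t - 1\<bar> \<le> M\<^sup>2 / 2" using one_minus_cos_le[of t] by simp
qed

lemma sin_minus_x: fixes a :: real shows "\<bar>sin a - a\<bar> \<le> \<bar>a\<bar>^3 / 2"
  using sinx_lip[of a "\<bar>a\<bar>" 0] by (simp add: power2_eq_square power3_eq_cube)

lemma quot_diff_bound: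
  fixes a1 a2 b1 b2 m :: real
  assumes "m > 0" "\<bar>b1\<bar> \<ge> m" "\<bar>b2\<bar> \<ge> m"
  shows "\<bar>a1/b1 - a2/b2\<bar> \<le> \<bar>a1 - a2\<bar>/m + \<bar>a2\<bar> * \<bar>b1 - b2\<bar> / m\<^sup>2"
proof -
  have b1: "b1 \<noteq> 0" and b2: "b2 \<noteq> 0" using assms by auto
  have eq: "a1/b1 - a2/b2 = (a1 - a2)/b1 + a2 * (b2 - b1)/(b1*b2)"
    using b1 b2 by (simp add: field_simps)
  have "\<bar>(a1 - a2)/b1\<bar> \<le> \<bar>a1 - a2\<bar>/m"
    using assms by (simp add: abs_divide divide_left_mono)
  moreover have "\<bar>a2 * (b2 - b1)/(b1*b2)\<bar> \<le> \<bar>a2\<bar> * \<bar>b1 - b2\<bar> / m\<^sup>2"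
  proof -
    have "m\<^sup>2 \<le> \<bar>b1*b2\<bar>" using assms
      by (simp add: abs_mult power2_eq_square mult_mono)
    hence "\<bar>a2 * (b2 - b1)\<bar> / \<bar>b1*b2\<bar> \<le> \<bar>a2 * (b2 - b1)\<bar> / m\<^sup>2"
      using assms b1 b2 by (intro divide_left_mono) (auto simp: abs_mult)
    thus ?thesis by (simp add: abs_divide abs_mult abs_minus_commute)
  qed
  ultimately show ?thesis unfolding eq by (meson abs_triangle_ineq add_mono order_trans)
qed



lemma evec_inner: "evec a \<bullet> evec b = cos (b - a)"
  by (simp add: evec_def inner_prod_def cos_diff)

lemma norm_evec[simp]: "norm (evec a) = 1"
  by (simp add: evec_def norm_prod_def)

lemma perp_evec: "perp (evec a) = evec (a + pi/2)"
  by (simp add: evec_def perp_def cos_add sin_add)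

lemma norm_perp[simp]: "norm (perp v) = norm v"
  by (simp add: perp_def norm_prod_def)

lemma inner_unit_le: "norm p = 1 \<Longrightarrow> norm q = 1 \<Longrightarrow> \<bar>p \<bullet> q\<bar> \<le> 1"
  using Cauchy_Schwarz_ineq2[of p q] by simp

lemma perp_perp[simp]: "perp (perp v) = - v"
  by (cases v) (simp add: perp_def)

lemma perp_inner_self[simp]: "perp v \<bullet> v = 0"
  by (simp add: perp_def inner_prod_def)

lemma perp_inner_swap: "perp v \<bullet> w = - (v \<bullet> perp w)"
  by (simp add: perp_def inner_prod_def)

lemma perp_scaleR: "perp (c *\<^sub>R v) = c *\<^sub>R perp v"
  by (simp add: perp_def)

lemma perp_add: "perp (v + w) = perp v + perp w"
  by (simp add: perp_def)

lemma perp_inner_perp[simp]: "perp v \<bullet> perp w = v \<bullet> w"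
  by (simp add: perp_def inner_prod_def)

lemma decomp_unit:
  assumes "norm e = 1"
  shows "v = (e \<bullet> v) *\<^sub>R e + (perp e \<bullet> v) *\<^sub>R perp e"
proof -
  obtain a b where e: "e = (a, b)" by (cases e)
  obtain c d where v: "v = (c, d)" by (cases v)
  have "a\<^sup>2 + b\<^sup>2 = 1" using assms e by (simp add: norm_prod_def)
  then show ?thesis unfolding e v
    by (simp add: perp_def inner_prod_def algebra_simps power2_eq_square)
       (metis (no_types, opaque_lifting) add.commute distrib_left mult.commute mult.left_commute mult_1_right)
qed

locale ctx =
  fixes J :: "int set" and \<phi> :: "int \<Rightarrow> real" and nj :: "int \<Rightarrow> nat" and n :: nat
    and H :: "real \<Rightarrow> real" and i :: int and x0 :: "real \<times> real"
  assumes finJ: "finite J" and iJ: "i \<in> J" and contH: "continuous_on UNIV H"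
    and online: "perp (evec (\<phi> i)) \<bullet> x0 = 0" and x0nz: "x0 \<noteq> 0"
    and transv: "\<And>j. j \<in> J \<Longrightarrow> j \<noteq> i \<Longrightarrow> perp (evec (\<phi> j)) \<bullet> evec (\<phi> i) \<noteq> 0"
begin

definition "ee = evec (\<phi> i)"
definition "EE = perp ee"
definition "t0 = ee \<bullet> x0"
definition "th0 = \<phi> i + pi/2"
definition "NN = real (nj i)"
definition "Gs X Y u = (\<Sum>j\<in>J-{i}. real (nj j) * (evec (\<phi> j) \<bullet> evec (th0 + u)) /
                       (perp (evec (\<phi> j)) \<bullet> (X *\<^sub>R ee + Y *\<^sub>R EE)))"
definition "fF t X Y u = Gs X Y u - (real n - 1) * H t"
definition "mm = (if J - {i} = {} then 1 else Min ((\<lambda>j. \<bar>t0 * (perp (evec (\<phi> j)) \<bullet> ee)\<bar> / 2) ` (J - {i})))"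
definition "reg X Y \<longleftrightarrow> \<bar>X - t0\<bar> \<le> mm/2 \<and> \<bar>Y\<bar> \<le> mm/2"
definition "SJ = (\<Sum>j\<in>J-{i}. real (nj j))"
definition "G0 = SJ / mm"
definition "LG = SJ * (1/mm + 1/mm\<^sup>2)"
definition "H0 = (SOME B. B \<ge> 0 \<and> (\<forall>t\<in>{-1..1}. \<bar>H t\<bar> \<le> B))"
definition "F0 = G0 + \<bar>real n - 1\<bar> * H0"

lemma norm_ee[simp]: "norm ee = 1" and norm_EE[simp]: "norm EE = 1"
  by (simp_all add: ee_def EE_def)

lemma ee_EE[simp]: "ee \<bullet> EE = 0" "EE \<bullet> ee = 0" "ee \<bullet> ee = 1" "EE \<bullet> EE = 1"
proof -
  show "ee \<bullet> EE = 0" unfolding EE_def using perp_inner_self[of ee] by (simp add: inner_commute)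
  thus "EE \<bullet> ee = 0" by (simp add: inner_commute)
  show "ee \<bullet> ee = 1" by (simp add: dot_square_norm)
  show "EE \<bullet> EE = 1" by (simp add: dot_square_norm)
qed

lemma decomp: "v = (ee \<bullet> v) *\<^sub>R ee + (EE \<bullet> v) *\<^sub>R EE"
  unfolding EE_def by (rule decomp_unit) simp

lemma x0_eq: "x0 = t0 *\<^sub>R ee"
  using decomp[of x0] online by (simp add: t0_def EE_def ee_def)

lemma t0_nz: "t0 \<noteq> 0"
  using x0_eq x0nz by auto

lemma SJ_nonneg: "SJ \<ge> 0" unfolding SJ_def by (simp add: sum_nonneg)

lemma mm_pos: "mm > 0"
proof (cases "J - {i} = {}")
  case True thus ?thesis by (simp add: mm_def)
next
  case False
  have "\<forall>j\<in>J-{i}. \<bar>t0 * (perp (evec (\<phi> j)) \<bullet> ee)\<bar> / 2 > 0"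
    using transv t0_nz by (auto simp: ee_def)
  thus ?thesis using False finJ by (simp add: mm_def)
qed

lemma mm_le: "j \<in> J - {i} \<Longrightarrow> 2 * mm \<le> \<bar>t0 * (perp (evec (\<phi> j)) \<bullet> ee)\<bar>"
proof -
  assume j: "j \<in> J - {i}"
  hence "J - {i} \<noteq> {}" by auto
  moreover have "Min ((\<lambda>j. \<bar>t0 * (perp (evec (\<phi> j)) \<bullet> ee)\<bar> / 2) ` (J - {i})) \<le> \<bar>t0 * (perp (evec (\<phi> j)) \<bullet> ee)\<bar> / 2"
    by (rule Min_le) (use j finJ in auto)
  ultimately have "mm \<le> \<bar>t0 * (perp (evec (\<phi> j)) \<bullet> ee)\<bar> / 2" by (simp add: mm_def)
  thus ?thesis by simp
qed

lemma den_eq: "perp (evec (\<phi> j)) \<bullet> (X *\<^sub>R ee + Y *\<^sub>R EE) = X * (perp (evec (\<phi> j)) \<bullet> ee) + Y * (perp (evec (\<phi> j)) \<bullet> EE)"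
  by (simp add: inner_add_right)

lemma pj_bounds: "\<bar>perp (evec (\<phi> j)) \<bullet> ee\<bar> \<le> 1" "\<bar>perp (evec (\<phi> j)) \<bullet> EE\<bar> \<le> 1"
  by (auto intro!: inner_unit_le)

lemma den_bound:
  assumes j: "j \<in> J - {i}" and r: "reg X Y"
  shows "\<bar>perp (evec (\<phi> j)) \<bullet> (X *\<^sub>R ee + Y *\<^sub>R EE)\<bar> \<ge> mm"
proof -
  let ?a = "perp (evec (\<phi> j)) \<bullet> ee" and ?b = "perp (evec (\<phi> j)) \<bullet> EE"
  have 1: "2*mm \<le> \<bar>t0 * ?a\<bar>" using mm_le j by blast
  have 2: "\<bar>(X - t0) * ?a\<bar> \<le> mm/2"
    using r pj_bounds(1)[of j] mm_pos unfolding reg_def abs_mult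
    by (metis abs_ge_zero mult_left_le mult.commute order_trans)
  have 3: "\<bar>Y * ?b\<bar> \<le> mm/2"
    using r pj_bounds(2)[of j] mm_pos unfolding reg_def abs_mult
    by (metis abs_ge_zero mult_left_le mult.commute order_trans)
  have "X * ?a + Y * ?b = t0 * ?a + (X - t0) * ?a + Y * ?b" by (simp add: algebra_simps)
  hence "\<bar>X * ?a + Y * ?b\<bar> \<ge> mm" using 1 2 3 by linarith
  thus ?thesis by (simp add: den_eq)
qed

lemma Gs_bound:
  assumes r: "reg X Y"
  shows "\<bar>Gs X Y u\<bar> \<le> G0"
proof -
  have "\<bar>Gs X Y u\<bar> \<le> (\<Sum>j\<in>J-{i}. \<bar>real (nj j) * (evec (\<phi> j) \<bullet> evec (th0 + u)) /
                       (perp (evec (\<phi> j)) \<bullet> (X *\<^sub>R ee + Y *\<^sub>R EE))\<bar>)"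
    unfolding Gs_def by (rule sum_abs)
  also have "\<dots> \<le> (\<Sum>j\<in>J-{i}. real (nj j) / mm)"
  proof (rule sum_mono)
    fix j assume j: "j \<in> J - {i}"
    have d: "\<bar>perp (evec (\<phi> j)) \<bullet> (X *\<^sub>R ee + Y *\<^sub>R EE)\<bar> \<ge> mm" by (rule den_bound[OF j r])
    have a: "\<bar>evec (\<phi> j) \<bullet> evec (th0 + u)\<bar> \<le> 1" by (rule inner_unit_le) auto
    have "\<bar>real (nj j) * (evec (\<phi> j) \<bullet> evec (th0 + u))\<bar> \<le> real (nj j)"
      using a by (simp add: abs_mult mult_left_le)
    thus "\<bar>real (nj j) * (evec (\<phi> j) \<bullet> evec (th0 + u)) / (perp (evec (\<phi> j)) \<bullet> (X *\<^sub>R ee + Y *\<^sub>R EE))\<bar>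
          \<le> real (nj j) / mm"
      using d mm_pos by (simp add: abs_divide frac_le)
  qed
  also have "\<dots> = G0" by (simp add: G0_def SJ_def sum_divide_distrib)
  finally show ?thesis .
qed

lemma Gs_lip:
  assumes r1: "reg X1 Y1" and r2: "reg X2 Y2"
  shows "\<bar>Gs X1 Y1 u1 - Gs X2 Y2 u2\<bar> \<le> LG * (\<bar>X1 - X2\<bar> + \<bar>Y1 - Y2\<bar> + \<bar>u1 - u2\<bar>)"
proof -
  let ?D = "\<bar>X1 - X2\<bar> + \<bar>Y1 - Y2\<bar> + \<bar>u1 - u2\<bar>"
  have "\<bar>Gs X1 Y1 u1 - Gs X2 Y2 u2\<bar> = \<bar>\<Sum>j\<in>J-{i}. real (nj j) * ((evec (\<phi> j) \<bullet> evec (th0 + u1)) /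
                       (perp (evec (\<phi> j)) \<bullet> (X1 *\<^sub>R ee + Y1 *\<^sub>R EE)) - (evec (\<phi> j) \<bullet> evec (th0 + u2)) /
                       (perp (evec (\<phi> j)) \<bullet> (X2 *\<^sub>R ee + Y2 *\<^sub>R EE)))\<bar>"
    unfolding Gs_def by (simp add: sum_subtractf[symmetric] algebra_simps)
  also have "\<dots> \<le> (\<Sum>j\<in>J-{i}. \<bar>real (nj j) * ((evec (\<phi> j) \<bullet> evec (th0 + u1)) /
                       (perp (evec (\<phi> j)) \<bullet> (X1 *\<^sub>R ee + Y1 *\<^sub>R EE)) - (evec (\<phi> j) \<bullet> evec (th0 + u2)) /
                       (perp (evec (\<phi> j)) \<bullet> (X2 *\<^sub>R ee + Y2 *\<^sub>R EE)))\<bar>)"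
    by (rule sum_abs)
  also have "\<dots> \<le> (\<Sum>j\<in>J-{i}. real (nj j) * ((1/mm + 1/mm\<^sup>2) * ?D))"
  proof (rule sum_mono)
    fix j assume j: "j \<in> J - {i}"
    let ?a1 = "evec (\<phi> j) \<bullet> evec (th0 + u1)" and ?a2 = "evec (\<phi> j) \<bullet> evec (th0 + u2)"
    let ?b1 = "perp (evec (\<phi> j)) \<bullet> (X1 *\<^sub>R ee + Y1 *\<^sub>R EE)"
    let ?b2 = "perp (evec (\<phi> j)) \<bullet> (X2 *\<^sub>R ee + Y2 *\<^sub>R EE)"
    have q: "\<bar>?a1/?b1 - ?a2/?b2\<bar> \<le> \<bar>?a1 - ?a2\<bar>/mm + \<bar>?a2\<bar> * \<bar>?b1 - ?b2\<bar> / mm\<^sup>2"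
      by (rule quot_diff_bound[OF mm_pos den_bound[OF j r1] den_bound[OF j r2]])
    have a: "\<bar>?a1 - ?a2\<bar> \<le> \<bar>u1 - u2\<bar>"
      using cos_lip[of "th0 + u1 - \<phi> j" "th0 + u2 - \<phi> j"] by (simp add: evec_inner)
    have a2: "\<bar>?a2\<bar> \<le> 1" by (rule inner_unit_le) auto
    have b: "\<bar>?b1 - ?b2\<bar> \<le> \<bar>X1 - X2\<bar> + \<bar>Y1 - Y2\<bar>"
    proof -
      have "?b1 - ?b2 = (X1 - X2) * (perp (evec (\<phi> j)) \<bullet> ee) + (Y1 - Y2) * (perp (evec (\<phi> j)) \<bullet> EE)"
        by (simp add: den_eq algebra_simps)
      moreover have "\<bar>(X1 - X2) * (perp (evec (\<phi> j)) \<bullet> ee)\<bar> \<le> \<bar>X1 - X2\<bar>"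
        using pj_bounds(1)[of j] by (simp add: abs_mult mult_left_le)
      moreover have "\<bar>(Y1 - Y2) * (perp (evec (\<phi> j)) \<bullet> EE)\<bar> \<le> \<bar>Y1 - Y2\<bar>"
        using pj_bounds(2)[of j] by (simp add: abs_mult mult_left_le)
      ultimately show ?thesis by linarith
    qed
    have "\<bar>?a1 - ?a2\<bar>/mm \<le> ?D/mm" using a mm_pos by (simp add: divide_right_mono)
    moreover have "\<bar>?a2\<bar> * \<bar>?b1 - ?b2\<bar> / mm\<^sup>2 \<le> ?D / mm\<^sup>2"
    proof -
      have "\<bar>?a2\<bar> * \<bar>?b1 - ?b2\<bar> \<le> 1 * ?D" using a2 b by (intro mult_mono) auto
      thus ?thesis using mm_pos by (simp add: divide_right_mono)
    qed
    ultimately have "\<bar>?a1/?b1 - ?a2/?b2\<bar> \<le> (1/mm + 1/mm\<^sup>2) * ?D" using q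
      by (simp add: algebra_simps add_divide_distrib)
    thus "\<bar>real (nj j) * (?a1/?b1 - ?a2/?b2)\<bar> \<le> real (nj j) * ((1/mm + 1/mm\<^sup>2) * ?D)"
      by (simp add: abs_mult mult_left_mono)
  qed
  also have "\<dots> = LG * ?D" by (simp add: LG_def SJ_def sum_distrib_right mult.assoc)
  finally show ?thesis .
qed

lemma Gs_cont:
  fixes T :: "real set"
  assumes "continuous_on T Xf" "continuous_on T Yf" "continuous_on T uf"
    and "\<And>t. t \<in> T \<Longrightarrow> reg (Xf t) (Yf t)"
  shows "continuous_on T (\<lambda>t. Gs (Xf t) (Yf t) (uf t))"
proof -
  have ev: "continuous_on T (\<lambda>t. evec (th0 + uf t))"
    unfolding evec_def by (auto intro!: continuous_intros assms(3))
  have nz: "\<And>j t. j \<in> J \<Longrightarrow> j \<noteq> i \<Longrightarrow> t \<in> T \<Longrightarrow> perp (evec (\<phi> j)) \<bullet> (Xf t *\<^sub>R ee + Yf t *\<^sub>R EE) \<noteq> 0"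
    using den_bound assms(4) mm_pos by force
  show ?thesis unfolding Gs_def
    using nz by (auto intro!: continuous_intros ev assms(1-3))
qed

lemma H0: "H0 \<ge> 0" "\<And>t. t \<in> {-1..1} \<Longrightarrow> \<bar>H t\<bar> \<le> H0"
proof -
  have "compact (H ` {-1..1})"
    by (rule compact_continuous_image) (auto intro: continuous_on_subset[OF contH])
  then obtain B where "\<forall>y\<in>H ` {-1..1}. norm y \<le> B" using compact_imp_bounded bounded_iff by metis
  hence "\<exists>B. B \<ge> 0 \<and> (\<forall>t\<in>{-1..1}. \<bar>H t\<bar> \<le> B)"
    by (intro exI[of _ "max B 0"]) auto
  from someI_ex[OF this] show "H0 \<ge> 0" "\<And>t. t \<in> {-1..1} \<Longrightarrow> \<bar>H t\<bar> \<le> H0"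
    unfolding H0_def by auto
qed

lemma F0_bound:
  assumes "reg X Y" "t \<in> {-1..1}"
  shows "\<bar>fF t X Y u\<bar> \<le> F0"
proof -
  have "\<bar>(real n - 1) * H t\<bar> \<le> \<bar>real n - 1\<bar> * H0"
    using H0(2)[OF assms(2)] by (simp add: abs_mult mult_left_mono)
  thus ?thesis using Gs_bound[OF assms(1), of u] unfolding fF_def F0_def by linarith
qed

lemma G0_nonneg: "G0 \<ge> 0" using SJ_nonneg mm_pos by (simp add: G0_def)
lemma LG_nonneg: "LG \<ge> 0" using SJ_nonneg mm_pos by (simp add: LG_def)
lemma F0_nonneg: "F0 \<ge> 0" using G0_nonneg H0(1) by (simp add: F0_def)

end


definition Ig :: "real \<Rightarrow> (real \<Rightarrow> real) \<Rightarrow> real \<Rightarrow> real" where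
  "Ig d g t = integral {-d..t} g - integral {-d..0} g"

lemma Ig_0[simp]: "Ig d g 0 = 0" by (simp add: Ig_def)

lemma Ig_deriv:
  assumes "continuous_on {-d..d} g" "t \<in> {-d..d}"
  shows "(Ig d g has_real_derivative g t) (at t within {-d..d})"
proof -
  have "((\<lambda>x. integral {-d..x} g - integral {-d..0} g) has_real_derivative g t - 0) (at t within {-d..d})"
    by (intro DERIV_diff integral_has_real_derivative assms DERIV_const)
  thus ?thesis by (simp add: Ig_def[abs_def])
qed

lemma Ig_deriv_at:
  assumes "continuous_on {-d..d} g" "t \<in> {-d<..<d}"
  shows "(Ig d g has_real_derivative g t) (at t)"
  using Ig_deriv[OF assms(1), of t] assms(2) at_within_Icc_at[of "-d" t d] by auto

lemma Ig_cont: "continuous_on {-d..d} g \<Longrightarrow> continuous_on {-d..d} (Ig d g)"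
  by (rule DERIV_continuous_on[OF Ig_deriv])

lemma seg_bound:
  fixes f f' :: "real \<Rightarrow> real"
  assumes "\<And>\<tau>. \<tau> \<in> {-d..d} \<Longrightarrow> (f has_real_derivative f' \<tau>) (at \<tau> within {-d..d})"
    and "t \<in> {-d..d}"
    and "\<And>\<tau>. \<tau> \<in> {min 0 t..max 0 t} \<Longrightarrow> \<bar>f' \<tau>\<bar> \<le> B"
  shows "\<bar>f t - f 0\<bar> \<le> B * \<bar>t\<bar>"
proof -
  have sub: "{min 0 t..max 0 t} \<subseteq> {-d..d}" using assms(2) by auto
  show ?thesis
    using deriv_bound_real[of 0 t f f' B] assms(3) sub
      DERIV_subset[OF assms(1) sub] by (auto simp: subset_iff)
qed

lemma seg_mem: "t \<in> {-d..d} \<Longrightarrow> \<tau> \<in> {min 0 t..max 0 t} \<Longrightarrow> \<bar>\<tau>\<bar> \<le> \<bar>t\<bar>"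
  for t \<tau> d :: real by auto

lemma seg_mem2: "t \<in> {-d..d} \<Longrightarrow> \<tau> \<in> {min 0 t..max 0 t} \<Longrightarrow> \<tau> \<in> {-d..d}"
  for t \<tau> d :: real by auto

context ctx begin

definition "Yf d u t = Ig d (\<lambda>\<tau>. cos (u \<tau>)) t"
definition "Xf d u t = t0 - Ig d (\<lambda>\<tau>. sin (u \<tau>)) t"
definition "Qf d u t = sin (u t) / Yf d u t - u t / t"
definition "hf d u t = - NN * Qf d u t + fF t (Xf d u t) (Yf d u t) (u t)"
definition "Pf d u s = Ig d (\<lambda>t. t ^ nj i * hf d u t) s"
definition "Psi d u s = Pf d u s / s ^ nj i"
definition "inS K d u \<longleftrightarrow> (\<forall>t\<in>{-d..d}. \<bar>u t\<bar> \<le> K * \<bar>t\<bar>)"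
definition "Lh K = NN * (2 * K\<^sup>2 + 4 * K) + 3 * LG"
definition "good K d \<longleftrightarrow> 0 < d \<and> d \<le> 1 \<and> 1 \<le> K \<and> K * d \<le> 1/2 \<and> d \<le> mm / 2 \<and>
     NN * (2 * K^3 * d\<^sup>2) \<le> 1 \<and> d * Lh K \<le> 1/2"

lemma NN_nonneg: "NN \<ge> 0" by (simp add: NN_def)
lemma Lh_nonneg: "K \<ge> 0 \<Longrightarrow> Lh K \<ge> 0" using NN_nonneg LG_nonneg by (simp add: Lh_def)

lemma good_ex: "1 \<le> K \<Longrightarrow> \<exists>d0>0. \<forall>d. 0 < d \<and> d \<le> d0 \<longrightarrow> good K d"
proof -
  assume K: "1 \<le> K"
  define d0 where "d0 = min (min 1 (1 / (2*K))) (min (mm/2) (min (1 / (2 * K^3 * (NN + 1))) (1 / (2 * (Lh K + 1)))))"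
  have LhK: "Lh K \<ge> 0" using Lh_nonneg K by simp
  have d0pos: "d0 > 0" using K mm_pos NN_nonneg LhK by (simp add: d0_def)
  show ?thesis
  proof (intro exI[of _ d0] conjI allI impI d0pos)
    fix d assume d: "0 < d \<and> d \<le> d0"
    have d1: "d \<le> 1" and d2: "d \<le> 1/(2*K)" and d3: "d \<le> mm/2"
      and d4: "d \<le> 1 / (2 * K^3 * (NN + 1))" and d5: "d \<le> 1 / (2 * (Lh K + 1))"
      using d by (auto simp: d0_def)
    have "K * d \<le> K * (1/(2*K))" using d2 K by (intro mult_left_mono) auto
    hence g4: "K * d \<le> 1/2" using K by simp
    have K3: "K^3 \<ge> 1" using K by simp
    have "NN * (2 * K^3 * d\<^sup>2) \<le> (NN + 1) * (2 * K^3 * d)"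
    proof -
      have dd: "d\<^sup>2 \<le> d" using d d1 by (simp add: power2_eq_square mult_le_cancel_left1)
      have kk: "2 * K^3 * d\<^sup>2 \<le> 2 * K^3 * d" using K3 K dd by (intro mult_left_mono) auto
      have "0 \<le> 2 * K^3 * d\<^sup>2" using K by simp
      thus ?thesis by (rule mult_mono[rotated 3]) (use NN_nonneg kk in auto)
    qed
    also have "\<dots> = 2 * K^3 * (NN + 1) * d" by simp
    also have "\<dots> \<le> 2 * K^3 * (NN + 1) * (1 / (2 * K^3 * (NN + 1)))"
      using d4 K3 NN_nonneg K by (intro mult_left_mono) auto
    also have "\<dots> = 1" using K3 NN_nonneg K by simp
    finally have g6: "NN * (2 * K^3 * d\<^sup>2) \<le> 1" .
    have "d * Lh K \<le> d * (Lh K + 1)" using d by simp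
    also have "\<dots> \<le> (1 / (2 * (Lh K + 1))) * (Lh K + 1)" using d5 LhK by (intro mult_right_mono) auto
    also have "\<dots> = 1/2" using LhK by simp
    finally have g7: "d * Lh K \<le> 1/2" .
    show "good K d" unfolding good_def using d d1 d3 K g4 g6 g7 by auto
  qed
qed

end


locale est = ctx +
  fixes K d :: real and u :: "real \<Rightarrow> real"
  assumes good: "good K d" and cu: "continuous_on {-d..d} u" and su: "inS K d u"
begin

lemma gd: "0 < d" "d \<le> 1" "1 \<le> K" "K * d \<le> 1/2" "d \<le> mm / 2"
  "NN * (2 * K^3 * d\<^sup>2) \<le> 1" "d * Lh K \<le> 1/2"
  using good by (auto simp: good_def)

lemma u_bd: "t \<in> {-d..d} \<Longrightarrow> \<bar>u t\<bar> \<le> K * \<bar>t\<bar>"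
  using su by (auto simp: inS_def)

lemma u0: "u 0 = 0" using u_bd[of 0] gd by simp

lemma Kt: "t \<in> {-d..d} \<Longrightarrow> K * \<bar>t\<bar> \<le> 1/2"
proof -
  assume "t \<in> {-d..d}"
  hence "\<bar>t\<bar> \<le> d" by auto
  hence "K * \<bar>t\<bar> \<le> K * d" using gd by (intro mult_left_mono) auto
  thus ?thesis using gd(4) by linarith
qed

lemma cont_cos: "continuous_on {-d..d} (\<lambda>\<tau>. cos (u \<tau>))"
  and cont_sin: "continuous_on {-d..d} (\<lambda>\<tau>. sin (u \<tau>))"
  by (intro continuous_intros cu)+

lemma Y_deriv: "t \<in> {-d..d} \<Longrightarrow> (Yf d u has_real_derivative cos (u t)) (at t within {-d..d})"
  unfolding Yf_def[abs_def] by (rule Ig_deriv[OF cont_cos])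

lemma X_deriv: "t \<in> {-d..d} \<Longrightarrow> (Xf d u has_real_derivative - sin (u t)) (at t within {-d..d})"
proof -
  assume t: "t \<in> {-d..d}"
  have "((\<lambda>t. t0 - Ig d (\<lambda>\<tau>. sin (u \<tau>)) t) has_real_derivative 0 - sin (u t)) (at t within {-d..d})"
    by (intro DERIV_diff DERIV_const Ig_deriv[OF cont_sin t])
  thus ?thesis by (simp add: Xf_def[abs_def])
qed

lemma Y_cont: "continuous_on {-d..d} (Yf d u)"
  by (rule DERIV_continuous_on[OF Y_deriv])
lemma X_cont: "continuous_on {-d..d} (Xf d u)"
  by (rule DERIV_continuous_on[OF X_deriv])

lemma Y0[simp]: "Yf d u 0 = 0" by (simp add: Yf_def)
lemma X0[simp]: "Xf d u 0 = t0" by (simp add: Xf_def)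

lemma Y_le: "t \<in> {-d..d} \<Longrightarrow> \<bar>Yf d u t\<bar> \<le> \<bar>t\<bar>"
  using seg_bound[OF Y_deriv, of t 1] by simp

lemma X_t: "t \<in> {-d..d} \<Longrightarrow> \<bar>Xf d u t - t0\<bar> \<le> \<bar>t\<bar>"
  using seg_bound[OF X_deriv, of t 1] by simp

lemma Y_t: "t \<in> {-d..d} \<Longrightarrow> \<bar>Yf d u t - t\<bar> \<le> K\<^sup>2 / 2 * \<bar>t\<bar> ^ 3"
proof -
  assume t: "t \<in> {-d..d}"
  have "\<bar>(Yf d u t - t) - (Yf d u 0 - 0)\<bar> \<le> (K\<^sup>2 / 2 * t\<^sup>2) * \<bar>t\<bar>"
  proof (rule seg_bound[where f'="\<lambda>\<tau>. cos (u \<tau>) - 1"])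
    fix \<tau> assume "\<tau> \<in> {-d..d}"
    thus "((\<lambda>t. Yf d u t - t) has_real_derivative cos (u \<tau>) - 1) (at \<tau> within {-d..d})"
      by (intro DERIV_diff Y_deriv DERIV_ident)
  next
    show "t \<in> {-d..d}" by fact
  next
    fix \<tau> assume tau: "\<tau> \<in> {min 0 t..max 0 t}"
    have "\<bar>u \<tau>\<bar> \<le> K * \<bar>t\<bar>"
      using u_bd[OF seg_mem2[OF t tau]] seg_mem[OF t tau] gd by (meson mult_left_mono order_trans zero_le_one order_trans[OF zero_le_one] less_eq_real_def)
    hence "(u \<tau>)\<^sup>2 \<le> (K * \<bar>t\<bar>)\<^sup>2" by (metis abs_ge_zero power2_abs power_mono)
    hence "1 - cos (u \<tau>) \<le> (K * \<bar>t\<bar>)\<^sup>2 / 2" using one_minus_cos_le[of "u \<tau>"] by linarith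
    thus "\<bar>cos (u \<tau>) - 1\<bar> \<le> K\<^sup>2 / 2 * t\<^sup>2" by (simp add: power_mult_distrib)
  qed
  thus ?thesis by (simp add: power2_eq_square power3_eq_cube abs_mult)
qed

lemma Y_ge: "t \<in> {-d..d} \<Longrightarrow> \<bar>Yf d u t\<bar> \<ge> \<bar>t\<bar> / 2"
proof -
  assume t: "t \<in> {-d..d}"
  have "(K * \<bar>t\<bar>)\<^sup>2 \<le> (1/2)\<^sup>2" using Kt[OF t] gd(3) by (intro power_mono) auto
  hence "K\<^sup>2 * t\<^sup>2 \<le> 1/4" by (simp add: power_mult_distrib power_divide)
  hence "(K\<^sup>2 * t\<^sup>2) * \<bar>t\<bar> \<le> (1/4) * \<bar>t\<bar>" by (rule mult_right_mono) auto
  moreover have "\<bar>t\<bar> ^ 3 = t\<^sup>2 * \<bar>t\<bar>"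
    by (metis power2_abs power3_eq_cube power2_eq_square)
  ultimately have "K\<^sup>2 / 2 * \<bar>t\<bar> ^ 3 \<le> \<bar>t\<bar> / 8" by (simp add: field_simps)
  thus ?thesis using Y_t[OF t] by linarith
qed

lemma Y_nz: "t \<in> {-d..d} \<Longrightarrow> t \<noteq> 0 \<Longrightarrow> Yf d u t \<noteq> 0"
  using Y_ge[of t] by auto

lemma reg_XY: "t \<in> {-d..d} \<Longrightarrow> reg (Xf d u t) (Yf d u t)"
proof -
  assume t: "t \<in> {-d..d}"
  have "\<bar>t\<bar> \<le> mm/2" using t gd by auto
  thus ?thesis using X_t[OF t] Y_le[OF t] by (simp add: reg_def)
qed

lemma Q_bd: "t \<in> {-d..d} \<Longrightarrow> \<bar>Qf d u t\<bar> \<le> 2 * K^3 * t\<^sup>2"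
proof (cases "t = 0")
  case True thus ?thesis by (simp add: Qf_def)
next
  case False
  assume t: "t \<in> {-d..d}"
  let ?a = "u t" and ?Y = "Yf d u t"
  have Y: "?Y \<noteq> 0" using Y_nz[OF t False] .
  have eq: "Qf d u t = (t * (sin ?a - ?a) + ?a * (t - ?Y)) / (t * ?Y)"
    using Y False by (simp add: Qf_def field_simps)
  have a: "\<bar>?a\<bar> \<le> K * \<bar>t\<bar>" by (rule u_bd[OF t])
  have n1: "\<bar>t * (sin ?a - ?a)\<bar> \<le> \<bar>t\<bar> * ((K * \<bar>t\<bar>)^3 / 2)"
  proof -
    have "\<bar>?a\<bar>^3 \<le> (K * \<bar>t\<bar>)^3" using a by (intro power_mono) auto
    hence "\<bar>sin ?a - ?a\<bar> \<le> (K * \<bar>t\<bar>)^3 / 2" using sin_minus_x[of ?a] by linarith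
    hence "\<bar>t\<bar> * \<bar>sin ?a - ?a\<bar> \<le> \<bar>t\<bar> * ((K * \<bar>t\<bar>)^3 / 2)" by (rule mult_left_mono) auto
    thus ?thesis by (simp add: abs_mult)
  qed
  have n2: "\<bar>?a * (t - ?Y)\<bar> \<le> (K * \<bar>t\<bar>) * (K\<^sup>2 / 2 * \<bar>t\<bar> ^ 3)"
  proof -
    have "\<bar>?a\<bar> * \<bar>t - ?Y\<bar> \<le> (K * \<bar>t\<bar>) * (K\<^sup>2 / 2 * \<bar>t\<bar> ^ 3)"
    proof (rule mult_mono)
      show "\<bar>t - ?Y\<bar> \<le> K\<^sup>2 / 2 * \<bar>t\<bar> ^ 3" using Y_t[OF t] by (simp add: abs_minus_commute)
    qed (use a gd in auto)
    thus ?thesis by (simp add: abs_mult)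
  qed
  have num: "\<bar>t * (sin ?a - ?a) + ?a * (t - ?Y)\<bar> \<le> K^3 * t\<^sup>2 * t\<^sup>2"
  proof -
    have "\<bar>t\<bar> * ((K * \<bar>t\<bar>)^3 / 2) + (K * \<bar>t\<bar>) * (K\<^sup>2 / 2 * \<bar>t\<bar> ^ 3) = K^3 * t\<^sup>2 * t\<^sup>2"
      by (simp add: power2_eq_square power3_eq_cube algebra_simps)
    thus ?thesis using n1 n2 abs_triangle_ineq[of "t * (sin ?a - ?a)" "?a * (t - ?Y)"] by linarith
  qed
  have den: "\<bar>t * ?Y\<bar> \<ge> t\<^sup>2 / 2"
  proof -
    have "\<bar>t\<bar> * (\<bar>t\<bar> / 2) \<le> \<bar>t\<bar> * \<bar>?Y\<bar>" using Y_ge[OF t] by (rule mult_left_mono) auto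
    thus ?thesis by (simp add: abs_mult power2_eq_square)
  qed
  have t2: "t\<^sup>2 > 0" using False by simp
  have "\<bar>Qf d u t\<bar> = \<bar>t * (sin ?a - ?a) + ?a * (t - ?Y)\<bar> / \<bar>t * ?Y\<bar>" by (simp add: eq abs_divide)
  also have "\<dots> \<le> (K^3 * t\<^sup>2 * t\<^sup>2) / (t\<^sup>2 / 2)"
    using num den t2 gd by (intro frac_le) auto
  also have "\<dots> = 2 * K^3 * t\<^sup>2" using t2 by (simp add: field_simps)
  finally show ?thesis .
qed

lemma Q0[simp]: "Qf d u 0 = 0" by (simp add: Qf_def)

lemma Q_cont: "continuous_on {-d..d} (Qf d u)"
  unfolding continuous_on_eq_continuous_within
proof
  fix t assume t: "t \<in> {-d..d}"
  show "continuous (at t within {-d..d}) (Qf d u)"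
  proof (cases "t = 0")
    case False
    have cu': "continuous (at t within {-d..d}) u" using cu t by (simp add: continuous_on_eq_continuous_within)
    have cY: "continuous (at t within {-d..d}) (Yf d u)" using Y_cont t by (simp add: continuous_on_eq_continuous_within)
    have "continuous (at t within {-d..d}) (\<lambda>t. sin (u t) / Yf d u t - u t / t)"
      using Y_nz[OF t False] False by (intro continuous_intros cu' cY) auto
    thus ?thesis by (simp add: Qf_def[abs_def])
  next
    case True
    have "(Qf d u \<longlongrightarrow> 0) (at 0 within {-d..d})"
    proof (rule Lim_null_comparison)
      show "\<forall>\<^sub>F x in at 0 within {-d..d}. norm (Qf d u x) \<le> 2 * K^3 * x\<^sup>2"
        using Q_bd by (auto simp: eventually_at_filter)
      have "((\<lambda>x. 2 * K^3 * x\<^sup>2) \<longlongrightarrow> 2 * K^3 * 0\<^sup>2) (at 0 within {-d..d})"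
        by (intro tendsto_intros)
      thus "((\<lambda>x. 2 * K^3 * x\<^sup>2) \<longlongrightarrow> 0) (at 0 within {-d..d})" by simp
    qed
    thus ?thesis using True by (simp add: continuous_within)
  qed
qed

lemma h_cont: "continuous_on {-d..d} (hf d u)"
proof -
  have g: "continuous_on {-d..d} (\<lambda>t. Gs (Xf d u t) (Yf d u t) (u t))"
    by (rule Gs_cont[OF X_cont Y_cont cu reg_XY])
  have "continuous_on {-d..d} (\<lambda>t. - NN * Qf d u t + (Gs (Xf d u t) (Yf d u t) (u t) - (real n - 1) * H t))"
    by (intro continuous_intros Q_cont g continuous_on_subset[OF contH]) auto
  thus ?thesis by (simp add: hf_def[abs_def] fF_def)
qed

lemma h_bd: "t \<in> {-d..d} \<Longrightarrow> \<bar>hf d u t\<bar> \<le> 1 + F0"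
proof -
  assume t: "t \<in> {-d..d}"
  have t1: "t \<in> {-1..1}" using t gd by auto
  have "t\<^sup>2 \<le> d\<^sup>2" using t by (simp add: abs_le_square_iff[symmetric] abs_le_iff) 
  hence "2 * K^3 * t\<^sup>2 \<le> 2 * K^3 * d\<^sup>2" using gd by (intro mult_left_mono) auto
  hence "\<bar>NN * Qf d u t\<bar> \<le> NN * (2 * K^3 * d\<^sup>2)"
    using Q_bd[OF t] NN_nonneg by (simp add: abs_mult mult_left_mono)
  hence "\<bar>NN * Qf d u t\<bar> \<le> 1" using gd by linarith
  moreover have "\<bar>fF t (Xf d u t) (Yf d u t) (u t)\<bar> \<le> F0" by (rule F0_bound[OF reg_XY[OF t] t1])
  ultimately show ?thesis unfolding hf_def by linarith
qed

end


lemma psi_gen: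
  fixes f g :: "real \<Rightarrow> real" and N :: nat
  assumes "\<And>\<tau>. \<tau> \<in> {-d..d} \<Longrightarrow> (f has_real_derivative \<tau>^N * g \<tau>) (at \<tau> within {-d..d})"
    and "f 0 = 0" and "\<And>\<tau>. \<tau> \<in> {-d..d} \<Longrightarrow> \<bar>g \<tau>\<bar> \<le> B" and s: "s \<in> {-d..d}"
  shows "\<bar>f s / s^N\<bar> \<le> B * \<bar>s\<bar>"
proof (cases "s = 0")
  case True thus ?thesis using assms(2) by (cases N) auto
next
  case False
  have B: "B \<ge> 0" using assms(3)[OF s] by linarith
  have "\<bar>f s - f 0\<bar> \<le> (\<bar>s\<bar>^N * B) * \<bar>s\<bar>"
  proof (rule seg_bound[OF assms(1) s])
    fix \<tau> assume tau: "\<tau> \<in> {min 0 s..max 0 s}"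
    have "\<bar>\<tau>\<bar>^N \<le> \<bar>s\<bar>^N" using seg_mem[OF s tau] by (intro power_mono) auto
    moreover have "\<bar>g \<tau>\<bar> \<le> B" using assms(3)[OF seg_mem2[OF s tau]] .
    ultimately have "\<bar>\<tau>\<bar>^N * \<bar>g \<tau>\<bar> \<le> \<bar>s\<bar>^N * B" by (intro mult_mono) auto
    thus "\<bar>\<tau>^N * g \<tau>\<bar> \<le> \<bar>s\<bar>^N * B" by (simp add: abs_mult power_abs)
  qed
  hence "\<bar>f s\<bar> \<le> (\<bar>s\<bar>^N * B) * \<bar>s\<bar>" using assms(2) by simp
  moreover have "\<bar>s\<bar>^N > 0" using False by simp
  ultimately show ?thesis by (simp add: abs_divide power_abs field_simps)
qed

context ctx begin

lemma h_lip:
  assumes A: "est J \<phi> nj H i x0 K d u1" and B: "est J \<phi> nj H i x0 K d u2"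
    and D: "\<And>t. t \<in> {-d..d} \<Longrightarrow> \<bar>u1 t - u2 t\<bar> \<le> D" and t: "t \<in> {-d..d}"
  shows "\<bar>hf d u1 t - hf d u2 t\<bar> \<le> Lh K * D"
proof -
  interpret A: est J \<phi> nj n H i x0 K d u1 by (rule A)
  interpret B: est J \<phi> nj n H i x0 K d u2 by (rule B)
  have D0: "D \<ge> 0" using D[of 0] A.gd by auto
  have tb: "\<bar>t\<bar> \<le> 1" using t A.gd by auto
  have Yd: "\<bar>Yf d u1 t - Yf d u2 t\<bar> \<le> D * \<bar>t\<bar>"
  proof -
    have "\<bar>(Yf d u1 t - Yf d u2 t) - (Yf d u1 0 - Yf d u2 0)\<bar> \<le> D * \<bar>t\<bar>"
    proof (rule seg_bound[where f'="\<lambda>\<tau>. cos (u1 \<tau>) - cos (u2 \<tau>)"])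
      show "\<And>\<tau>. \<tau> \<in> {-d..d} \<Longrightarrow> ((\<lambda>t. Yf d u1 t - Yf d u2 t) has_real_derivative cos (u1 \<tau>) - cos (u2 \<tau>)) (at \<tau> within {-d..d})"
        by (intro DERIV_diff A.Y_deriv B.Y_deriv)
      show "t \<in> {-d..d}" by fact
      fix \<tau> assume "\<tau> \<in> {min 0 t..max 0 t}"
      hence "\<tau> \<in> {-d..d}" using seg_mem2[OF t] by blast
      thus "\<bar>cos (u1 \<tau>) - cos (u2 \<tau>)\<bar> \<le> D" using cos_lip[of "u1 \<tau>" "u2 \<tau>"] D by (meson order_trans)
    qed
    thus ?thesis by simp
  qed
  have Xd: "\<bar>Xf d u1 t - Xf d u2 t\<bar> \<le> D * \<bar>t\<bar>"
  proof -
    have "\<bar>(Xf d u1 t - Xf d u2 t) - (Xf d u1 0 - Xf d u2 0)\<bar> \<le> D * \<bar>t\<bar>"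
    proof (rule seg_bound[where f'="\<lambda>\<tau>. - sin (u1 \<tau>) - - sin (u2 \<tau>)"])
      show "\<And>\<tau>. \<tau> \<in> {-d..d} \<Longrightarrow> ((\<lambda>t. Xf d u1 t - Xf d u2 t) has_real_derivative - sin (u1 \<tau>) - - sin (u2 \<tau>)) (at \<tau> within {-d..d})"
        by (intro DERIV_diff A.X_deriv B.X_deriv)
      show "t \<in> {-d..d}" by fact
      fix \<tau> assume "\<tau> \<in> {min 0 t..max 0 t}"
      hence "\<tau> \<in> {-d..d}" using seg_mem2[OF t] by blast
      thus "\<bar>- sin (u1 \<tau>) - - sin (u2 \<tau>)\<bar> \<le> D" using sin_lip[of "u1 \<tau>" "u2 \<tau>"] D
        by (smt (verit))
    qed
    thus ?thesis by simp
  qed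
  have Qd: "\<bar>Qf d u1 t - Qf d u2 t\<bar> \<le> (2 * K\<^sup>2 + 4 * K) * D"
  proof (cases "t = 0")
    case True thus ?thesis using D0 A.gd by simp
  next
    case False
    let ?a1 = "u1 t" and ?a2 = "u2 t" and ?Y1 = "Yf d u1 t" and ?Y2 = "Yf d u2 t"
    have Y1: "?Y1 \<noteq> 0" using A.Y_nz[OF t False] .
    have Y2: "?Y2 \<noteq> 0" using B.Y_nz[OF t False] .
    have eq: "Qf d u1 t - Qf d u2 t = (t * ((sin ?a1 - ?a1) - (sin ?a2 - ?a2)) + (?a1 - ?a2) * (t - ?Y1)) / (t * ?Y1)
               + sin ?a2 * (?Y2 - ?Y1) / (?Y1 * ?Y2)"
      using Y1 Y2 False by (simp add: Qf_def field_simps)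
    have a1: "\<bar>?a1\<bar> \<le> K * \<bar>t\<bar>" by (rule A.u_bd[OF t])
    have a2: "\<bar>?a2\<bar> \<le> K * \<bar>t\<bar>" by (rule B.u_bd[OF t])
    have dd: "\<bar>?a1 - ?a2\<bar> \<le> D" by (rule D[OF t])
    have t2: "t\<^sup>2 > 0" using False by simp
    have n1: "\<bar>t * ((sin ?a1 - ?a1) - (sin ?a2 - ?a2))\<bar> \<le> \<bar>t\<bar> * ((K * \<bar>t\<bar>)\<^sup>2 / 2 * D)"
    proof -
      have "\<bar>(sin ?a1 - ?a1) - (sin ?a2 - ?a2)\<bar> \<le> (K * \<bar>t\<bar>)\<^sup>2 / 2 * \<bar>?a1 - ?a2\<bar>"
        by (rule sinx_lip[OF a1 a2])
      also have "\<dots> \<le> (K * \<bar>t\<bar>)\<^sup>2 / 2 * D" using dd by (intro mult_left_mono) auto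
      finally have "\<bar>t\<bar> * \<bar>(sin ?a1 - ?a1) - (sin ?a2 - ?a2)\<bar> \<le> \<bar>t\<bar> * ((K * \<bar>t\<bar>)\<^sup>2 / 2 * D)"
        by (rule mult_left_mono) auto
      thus ?thesis by (simp add: abs_mult)
    qed
    have n2: "\<bar>(?a1 - ?a2) * (t - ?Y1)\<bar> \<le> D * (K\<^sup>2 / 2 * \<bar>t\<bar> ^ 3)"
    proof -
      have "\<bar>?a1 - ?a2\<bar> * \<bar>t - ?Y1\<bar> \<le> D * (K\<^sup>2 / 2 * \<bar>t\<bar> ^ 3)"
      proof (rule mult_mono)
        show "\<bar>t - ?Y1\<bar> \<le> K\<^sup>2 / 2 * \<bar>t\<bar> ^ 3" using A.Y_t[OF t] by (simp add: abs_minus_commute)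
      qed (use dd D0 in auto)
      thus ?thesis by (simp add: abs_mult)
    qed
    have num: "\<bar>t * ((sin ?a1 - ?a1) - (sin ?a2 - ?a2)) + (?a1 - ?a2) * (t - ?Y1)\<bar> \<le> K\<^sup>2 * D * \<bar>t\<bar> * t\<^sup>2"
    proof -
      have "\<bar>t\<bar> * ((K * \<bar>t\<bar>)\<^sup>2 / 2 * D) + D * (K\<^sup>2 / 2 * \<bar>t\<bar> ^ 3) = K\<^sup>2 * D * \<bar>t\<bar> * t\<^sup>2"
        by (simp add: power2_eq_square power3_eq_cube algebra_simps)
      thus ?thesis using n1 n2 abs_triangle_ineq[of "t * ((sin ?a1 - ?a1) - (sin ?a2 - ?a2))" "(?a1 - ?a2) * (t - ?Y1)"]
        by linarith
    qed
    have den: "\<bar>t * ?Y1\<bar> \<ge> t\<^sup>2 / 2"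
    proof -
      have "\<bar>t\<bar> * (\<bar>t\<bar> / 2) \<le> \<bar>t\<bar> * \<bar>?Y1\<bar>" using A.Y_ge[OF t] by (rule mult_left_mono) auto
      thus ?thesis by (simp add: abs_mult power2_eq_square)
    qed
    have part1: "\<bar>(t * ((sin ?a1 - ?a1) - (sin ?a2 - ?a2)) + (?a1 - ?a2) * (t - ?Y1)) / (t * ?Y1)\<bar> \<le> 2 * K\<^sup>2 * D"
    proof -
      have "\<bar>(t * ((sin ?a1 - ?a1) - (sin ?a2 - ?a2)) + (?a1 - ?a2) * (t - ?Y1)) / (t * ?Y1)\<bar>
            \<le> (K\<^sup>2 * D * \<bar>t\<bar> * t\<^sup>2) / (t\<^sup>2 / 2)"
        unfolding abs_divide using num den t2 D0 by (intro frac_le) auto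
      also have "\<dots> = 2 * K\<^sup>2 * D * \<bar>t\<bar>" using t2 by (simp add: field_simps)
      also have "\<dots> \<le> 2 * K\<^sup>2 * D * 1" using tb D0 by (intro mult_left_mono) auto
      finally show ?thesis by simp
    qed
    have part2: "\<bar>sin ?a2 * (?Y2 - ?Y1) / (?Y1 * ?Y2)\<bar> \<le> 4 * K * D"
    proof -
      have s2: "\<bar>sin ?a2\<bar> \<le> K * \<bar>t\<bar>" using abs_sin_x_le_abs_x[of ?a2] a2 by linarith
      have yy: "\<bar>?Y2 - ?Y1\<bar> \<le> D * \<bar>t\<bar>" using Yd by (simp add: abs_minus_commute)
      have nn: "\<bar>sin ?a2 * (?Y2 - ?Y1)\<bar> \<le> (K * \<bar>t\<bar>) * (D * \<bar>t\<bar>)"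
        unfolding abs_mult by (rule mult_mono[OF s2 yy]) (use A.gd in auto)
      have dn: "\<bar>?Y1 * ?Y2\<bar> \<ge> (\<bar>t\<bar>/2) * (\<bar>t\<bar>/2)"
        unfolding abs_mult by (rule mult_mono[OF A.Y_ge[OF t] B.Y_ge[OF t]]) auto
      have "\<bar>sin ?a2 * (?Y2 - ?Y1) / (?Y1 * ?Y2)\<bar> \<le> ((K * \<bar>t\<bar>) * (D * \<bar>t\<bar>)) / ((\<bar>t\<bar>/2) * (\<bar>t\<bar>/2))"
        unfolding abs_divide using nn dn False A.gd D0 t2 by (intro frac_le) (auto simp: power2_eq_square)
      also have "\<dots> = 4 * K * D" using False by (simp add: field_simps)
      finally show ?thesis .
    qed
    have "(2 * K\<^sup>2 + 4 * K) * D = 2 * K\<^sup>2 * D + 4 * K * D" by (simp add: algebra_simps)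
    moreover have "\<bar>(t * ((sin ?a1 - ?a1) - (sin ?a2 - ?a2)) + (?a1 - ?a2) * (t - ?Y1)) / (t * ?Y1)
               + sin ?a2 * (?Y2 - ?Y1) / (?Y1 * ?Y2)\<bar> \<le> \<bar>(t * ((sin ?a1 - ?a1) - (sin ?a2 - ?a2)) + (?a1 - ?a2) * (t - ?Y1)) / (t * ?Y1)\<bar>
               + \<bar>sin ?a2 * (?Y2 - ?Y1) / (?Y1 * ?Y2)\<bar>" by (rule abs_triangle_ineq)
    ultimately show ?thesis using order_trans[OF _ add_mono[OF part1 part2]] unfolding eq by metis
  qed
  have Gd: "\<bar>Gs (Xf d u1 t) (Yf d u1 t) (u1 t) - Gs (Xf d u2 t) (Yf d u2 t) (u2 t)\<bar> \<le> 3 * LG * D"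
  proof -
    have "\<bar>Gs (Xf d u1 t) (Yf d u1 t) (u1 t) - Gs (Xf d u2 t) (Yf d u2 t) (u2 t)\<bar>
          \<le> LG * (\<bar>Xf d u1 t - Xf d u2 t\<bar> + \<bar>Yf d u1 t - Yf d u2 t\<bar> + \<bar>u1 t - u2 t\<bar>)"
      by (rule Gs_lip[OF A.reg_XY[OF t] B.reg_XY[OF t]])
    also have "\<dots> \<le> LG * (3 * D)"
    proof (rule mult_left_mono[OF _ LG_nonneg])
      have "D * \<bar>t\<bar> \<le> D" using tb D0 by (simp add: mult_left_le)
      thus "\<bar>Xf d u1 t - Xf d u2 t\<bar> + \<bar>Yf d u1 t - Yf d u2 t\<bar> + \<bar>u1 t - u2 t\<bar> \<le> 3 * D"
        using Xd Yd D[OF t] by linarith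
    qed
    finally show ?thesis by simp
  qed
  have "hf d u1 t - hf d u2 t = - NN * (Qf d u1 t - Qf d u2 t) +
        (Gs (Xf d u1 t) (Yf d u1 t) (u1 t) - Gs (Xf d u2 t) (Yf d u2 t) (u2 t))"
    by (simp add: hf_def fF_def algebra_simps)
  moreover have "\<bar>NN * (Qf d u1 t - Qf d u2 t)\<bar> \<le> NN * ((2 * K\<^sup>2 + 4 * K) * D)"
    using Qd NN_nonneg by (simp add: abs_mult mult_left_mono)
  moreover have "Lh K * D = NN * ((2 * K\<^sup>2 + 4 * K) * D) + 3 * LG * D" by (simp add: Lh_def algebra_simps)
  ultimately show ?thesis using Gd abs_triangle_ineq[of "- NN * (Qf d u1 t - Qf d u2 t)" "Gs (Xf d u1 t) (Yf d u1 t) (u1 t) - Gs (Xf d u2 t) (Yf d u2 t) (u2 t)"]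
    by (simp only:)
qed

end


context est begin

lemma Pf_deriv: "\<tau> \<in> {-d..d} \<Longrightarrow> (Pf d u has_real_derivative \<tau>^nj i * hf d u \<tau>) (at \<tau> within {-d..d})"
  unfolding Pf_def[abs_def] by (rule Ig_deriv) (intro continuous_intros h_cont)

lemma Pf0[simp]: "Pf d u 0 = 0" by (simp add: Pf_def)

lemma Psi0[simp]: "Psi d u 0 = 0" by (simp add: Psi_def)

lemma Psi_bd: "s \<in> {-d..d} \<Longrightarrow> \<bar>Psi d u s\<bar> \<le> (1 + F0) * \<bar>s\<bar>"
  unfolding Psi_def by (rule psi_gen[OF Pf_deriv Pf0 h_bd])

lemma Pf_cont: "continuous_on {-d..d} (Pf d u)"
  by (rule DERIV_continuous_on[OF Pf_deriv])

lemma Psi_cont: "continuous_on {-d..d} (Psi d u)"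
  unfolding continuous_on_eq_continuous_within
proof
  fix t assume t: "t \<in> {-d..d}"
  show "continuous (at t within {-d..d}) (Psi d u)"
  proof (cases "t = 0")
    case False
    have cP: "continuous (at t within {-d..d}) (Pf d u)" using Pf_cont t by (simp add: continuous_on_eq_continuous_within)
    have "continuous (at t within {-d..d}) (\<lambda>t. Pf d u t / t ^ nj i)"
      using False by (intro continuous_intros cP) auto
    thus ?thesis by (simp add: Psi_def[abs_def])
  next
    case True
    have "(Psi d u \<longlongrightarrow> 0) (at 0 within {-d..d})"
    proof (rule Lim_null_comparison)
      show "\<forall>\<^sub>F x in at 0 within {-d..d}. norm (Psi d u x) \<le> (1 + F0) * \<bar>x\<bar>"
        using Psi_bd by (auto simp: eventually_at_filter)
      have "((\<lambda>x. (1 + F0) * \<bar>x\<bar>) \<longlongrightarrow> (1 + F0) * \<bar>0\<bar>) (at 0 within {-d..d})"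
        by (intro tendsto_intros)
      thus "((\<lambda>x. (1 + F0) * \<bar>x\<bar>) \<longlongrightarrow> 0) (at 0 within {-d..d})" by simp
    qed
    thus ?thesis using True by (simp add: continuous_within)
  qed
qed

end

context ctx begin

lemma mk_est: "good K d \<Longrightarrow> continuous_on {-d..d} u \<Longrightarrow> inS K d u \<Longrightarrow> est J \<phi> nj H i x0 K d u"
  by (intro est.intro est_axioms.intro ctx_axioms)

lemma Psi_lip:
  assumes A: "est J \<phi> nj H i x0 K d u1" and B: "est J \<phi> nj H i x0 K d u2"
    and D: "\<And>t. t \<in> {-d..d} \<Longrightarrow> \<bar>u1 t - u2 t\<bar> \<le> D" and s: "s \<in> {-d..d}"
  shows "\<bar>Psi d u1 s - Psi d u2 s\<bar> \<le> Lh K * D * \<bar>s\<bar>"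
proof -
  interpret A: est J \<phi> nj n H i x0 K d u1 by (rule A)
  interpret B: est J \<phi> nj n H i x0 K d u2 by (rule B)
  have "\<bar>(Pf d u1 s - Pf d u2 s) / s ^ nj i\<bar> \<le> Lh K * D * \<bar>s\<bar>"
  proof (rule psi_gen[where g="\<lambda>\<tau>. hf d u1 \<tau> - hf d u2 \<tau>"])
    fix \<tau> assume t: "\<tau> \<in> {-d..d}"
    show "((\<lambda>s. Pf d u1 s - Pf d u2 s) has_real_derivative \<tau>^nj i * (hf d u1 \<tau> - hf d u2 \<tau>)) (at \<tau> within {-d..d})"
      using DERIV_diff[OF A.Pf_deriv[OF t] B.Pf_deriv[OF t]] by (simp add: right_diff_distrib)
    show "\<bar>hf d u1 \<tau> - hf d u2 \<tau>\<bar> \<le> Lh K * D" by (rule h_lip[OF A B D t])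
  qed (use s in simp_all)
  thus ?thesis by (simp add: Psi_def diff_divide_distrib)
qed

definition cl :: "real \<Rightarrow> real \<Rightarrow> real" where "cl d s = max (-d) (min d s)"

lemma cl_mem: "0 \<le> d \<Longrightarrow> cl d s \<in> {-d..d}" by (auto simp: cl_def)
lemma cl_id: "s \<in> {-d..d} \<Longrightarrow> cl d s = s" by (auto simp: cl_def)
lemma cl_cont: "continuous_on UNIV (cl d)" unfolding cl_def[abs_def] by (intro continuous_intros)

definition "Phi d w = Bcontfun (\<lambda>s. Psi d (apply_bcontfun w) (cl d s))"

lemma Phi_apply:
  assumes g: "good K d" and w: "inS K d (apply_bcontfun w)"
  shows "apply_bcontfun (Phi d w) = (\<lambda>s. Psi d (apply_bcontfun w) (cl d s))"
proof -
  interpret A: est J \<phi> nj n H i x0 K d "apply_bcontfun w" by (rule mk_est[OF g _ w]) simp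
  have d0: "0 \<le> d" using A.gd by simp
  have "(\<lambda>s. Psi d (apply_bcontfun w) (cl d s)) \<in> bcontfun"
  proof (rule bcontfun_normI)
    show "continuous_on UNIV (\<lambda>s. Psi d (apply_bcontfun w) (cl d s))"
      by (rule continuous_on_compose2[OF A.Psi_cont cl_cont]) (use cl_mem[OF d0] in auto)
    fix s
    have "\<bar>Psi d (apply_bcontfun w) (cl d s)\<bar> \<le> (1 + F0) * \<bar>cl d s\<bar>" by (rule A.Psi_bd[OF cl_mem[OF d0]])
    also have "\<dots> \<le> (1 + F0) * d" using cl_mem[OF d0, of s] F0_nonneg by (intro mult_left_mono) auto
    finally show "norm (Psi d (apply_bcontfun w) (cl d s)) \<le> (1 + F0) * d" by simp
  qed
  thus ?thesis by (simp add: Phi_def Bcontfun_inverse)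
qed

lemma fixpoint_exists:
  assumes g: "good K d" and K: "1 + F0 \<le> K"
  shows "\<exists>u. continuous_on UNIV u \<and> inS K d u \<and> (\<forall>s\<in>{-d..d}. u s = Psi d u s)"
proof -
  define S where "S = {w :: real \<Rightarrow>\<^sub>C real. inS K d (apply_bcontfun w)}"
  have d0: "0 \<le> d" using g by (simp add: good_def)
  have closedS: "closed S"
  proof -
    have "S = {w. \<forall>t. t \<in> {-d..d} \<longrightarrow> \<bar>apply_bcontfun w t\<bar> \<le> K * \<bar>t\<bar>}"
      by (auto simp: S_def inS_def)
    also have "closed \<dots>"
    proof (intro closed_Collect_all closed_Collect_imp open_Collect_const closed_Collect_le continuous_on_const)
      fix t
      have "continuous_on UNIV (\<lambda>w :: real \<Rightarrow>\<^sub>C real. apply_bcontfun w t)"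
        unfolding continuous_on_iff
        by (metis dist_bounded le_less_trans)
      thus "continuous_on UNIV (\<lambda>w :: real \<Rightarrow>\<^sub>C real. \<bar>apply_bcontfun w t\<bar>)"
        by (intro continuous_intros)
    qed
    finally show ?thesis .
  qed
  have "\<exists>!w\<in>S. Phi d w = w"
  proof (rule Banach_fix)
    show "complete S" using closedS by (simp add: complete_eq_closed)
    show "S \<noteq> {}" using S_def d0 g by (auto intro!: exI[of _ 0] simp: inS_def good_def)
    show "(0::real) \<le> 1/2" "(1::real)/2 < 1" by auto
    show "Phi d ` S \<subseteq> S"
    proof
      fix v assume "v \<in> Phi d ` S"
      then obtain w where w: "w \<in> S" and v: "v = Phi d w" by auto
      have wS: "inS K d (apply_bcontfun w)" using w by (simp add: S_def)
      interpret A: est J \<phi> nj n H i x0 K d "apply_bcontfun w" by (rule mk_est[OF g _ wS]) simp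
      have "inS K d (apply_bcontfun v)"
        unfolding inS_def v Phi_apply[OF g wS]
      proof
        fix t assume t: "t \<in> {-d..d}"
        have "\<bar>Psi d (apply_bcontfun w) t\<bar> \<le> (1 + F0) * \<bar>t\<bar>" by (rule A.Psi_bd[OF t])
        also have "\<dots> \<le> K * \<bar>t\<bar>" using K by (intro mult_right_mono) auto
        finally show "\<bar>Psi d (apply_bcontfun w) (cl d t)\<bar> \<le> K * \<bar>t\<bar>" using cl_id[OF t] by simp
      qed
      thus "v \<in> S" by (simp add: S_def)
    qed
    fix w1 w2 assume w1: "w1 \<in> S" and w2: "w2 \<in> S"
    have s1: "inS K d (apply_bcontfun w1)" and s2: "inS K d (apply_bcontfun w2)" using w1 w2 by (auto simp: S_def)
    have A: "est J \<phi> nj H i x0 K d (apply_bcontfun w1)" by (rule mk_est[OF g _ s1]) simp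
    have B: "est J \<phi> nj H i x0 K d (apply_bcontfun w2)" by (rule mk_est[OF g _ s2]) simp
    have D: "\<And>t. \<bar>apply_bcontfun w1 t - apply_bcontfun w2 t\<bar> \<le> dist w1 w2"
      using dist_bounded by (metis dist_real_def)
    have LhK: "0 \<le> Lh K" using Lh_nonneg g by (simp add: good_def)
    show "dist (Phi d w1) (Phi d w2) \<le> 1/2 * dist w1 w2"
    proof (rule dist_bound)
      fix s
      have "\<bar>Psi d (apply_bcontfun w1) (cl d s) - Psi d (apply_bcontfun w2) (cl d s)\<bar> \<le> Lh K * dist w1 w2 * \<bar>cl d s\<bar>"
        by (rule Psi_lip[OF A B D cl_mem[OF d0]])
      also have "\<dots> \<le> Lh K * dist w1 w2 * d" using cl_mem[OF d0, of s] LhK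
        by (intro mult_left_mono) auto
      also have "\<dots> = (d * Lh K) * dist w1 w2" by simp
      also have "\<dots> \<le> 1/2 * dist w1 w2" using g by (intro mult_right_mono) (auto simp: good_def)
      finally show "dist (apply_bcontfun (Phi d w1) s) (apply_bcontfun (Phi d w2) s) \<le> 1/2 * dist w1 w2"
        by (simp add: Phi_apply[OF g s1] Phi_apply[OF g s2] dist_real_def)
    qed
  qed
  then obtain w where w: "w \<in> S" and fw: "Phi d w = w" by auto
  have wS: "inS K d (apply_bcontfun w)" using w by (simp add: S_def)
  show ?thesis
  proof (intro exI[of _ "apply_bcontfun w"] conjI ballI)
    show "continuous_on UNIV (apply_bcontfun w)" by simp
    show "inS K d (apply_bcontfun w)" by fact
    fix s assume s: "s \<in> {-d..d}"
    have "apply_bcontfun w s = apply_bcontfun (Phi d w) s" using fw by simp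
    also have "\<dots> = Psi d (apply_bcontfun w) s" by (simp add: Phi_apply[OF g wS] cl_id[OF s])
    finally show "apply_bcontfun w s = Psi d (apply_bcontfun w) s" .
  qed
qed

lemma fixpoint_unique:
  assumes g: "good K d"
    and c1: "continuous_on {-d..d} u1" and s1: "inS K d u1" and f1: "\<And>s. s \<in> {-d..d} \<Longrightarrow> u1 s = Psi d u1 s"
    and c2: "continuous_on {-d..d} u2" and s2: "inS K d u2" and f2: "\<And>s. s \<in> {-d..d} \<Longrightarrow> u2 s = Psi d u2 s"
  shows "\<forall>s\<in>{-d..d}. u1 s = u2 s"
proof -
  have A: "est J \<phi> nj H i x0 K d u1" by (rule mk_est[OF g c1 s1])
  have B: "est J \<phi> nj H i x0 K d u2" by (rule mk_est[OF g c2 s2])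
  have d0: "0 \<le> d" using g by (simp add: good_def)
  have "continuous_on {-d..d} (\<lambda>t. \<bar>u1 t - u2 t\<bar>)" by (intro continuous_intros c1 c2)
  then obtain tm where tm: "tm \<in> {-d..d}" and mx: "\<And>t. t \<in> {-d..d} \<Longrightarrow> \<bar>u1 t - u2 t\<bar> \<le> \<bar>u1 tm - u2 tm\<bar>"
    using continuous_attains_sup[of "{-d..d}" "\<lambda>t. \<bar>u1 t - u2 t\<bar>"] d0 by auto
  let ?D = "\<bar>u1 tm - u2 tm\<bar>"
  have LhK: "0 \<le> Lh K" using Lh_nonneg g by (simp add: good_def)
  have "?D = \<bar>Psi d u1 tm - Psi d u2 tm\<bar>" using f1[OF tm] f2[OF tm] by simp
  also have "\<dots> \<le> Lh K * ?D * \<bar>tm\<bar>" by (rule Psi_lip[OF A B mx tm])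
  also have "\<dots> \<le> Lh K * ?D * d" using tm LhK by (intro mult_left_mono) auto
  also have "\<dots> = (d * Lh K) * ?D" by simp
  also have "\<dots> \<le> 1/2 * ?D" using g by (intro mult_right_mono) (auto simp: good_def)
  finally have "?D = 0" by simp
  thus ?thesis using mx by fastforce
qed

end


lemma evec_rot: "evec (a + pi/2 + t) = - sin t *\<^sub>R evec a + cos t *\<^sub>R perp (evec a)"
  by (simp add: evec_def perp_def cos_add sin_add algebra_simps)

lemma pw_id: "s \<noteq> 0 \<Longrightarrow> real N * s^(N - Suc 0) = real N * s^N / (s::real)"
  by (cases N) auto

lemma alg1: "p \<noteq> 0 \<Longrightarrow> s \<noteq> 0 \<Longrightarrow> (p*h*p - u*p*(c*p/s))/(p*p) = h - c*u/(s::real)"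
  by (simp add: field_simps)

locale fp = est +
  assumes fixp: "\<And>s. s \<in> {-d..d} \<Longrightarrow> u s = Psi d u s"
begin

definition "Lz = hf d u 0 / (real (nj i) + 1)"
definition "ww s = (if s = 0 then Lz else hf d u s - NN * u s / s)"

lemma h_isCont: "t \<in> {-d<..<d} \<Longrightarrow> isCont (hf d u) t"
  using continuous_on_interior[OF h_cont, of t] by simp

lemma u_isCont: "t \<in> {-d<..<d} \<Longrightarrow> isCont u t"
  using continuous_on_interior[OF cu, of t] by simp

lemma ratio_lim:
  assumes r: "r > 0"
  shows "\<exists>\<rho>>0. \<forall>s. s \<noteq> 0 \<and> \<bar>s\<bar> < \<rho> \<longrightarrow> \<bar>u s / s - Lz\<bar> \<le> r"
proof -
  have "0 \<in> {-d..d}" using gd by simp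
  with h_cont r obtain \<rho>0 where \<rho>0: "\<rho>0 > 0"
    and h\<rho>: "\<And>x'. x' \<in> {-d..d} \<Longrightarrow> dist x' 0 < \<rho>0 \<Longrightarrow> dist (hf d u x') (hf d u 0) < r"
    unfolding continuous_on_iff by metis
  define \<rho> where "\<rho> = min \<rho>0 d"
  have \<rho>: "\<rho> > 0" using \<rho>0 gd by (simp add: \<rho>_def)
  show ?thesis
  proof (intro exI[of _ \<rho>] conjI allI impI \<rho>)
    fix s assume s: "s \<noteq> 0 \<and> \<bar>s\<bar> < \<rho>"
    define a where "a = \<bar>s\<bar>"
    have sd: "s \<in> {-d..d}" using s by (auto simp: \<rho>_def)
    have sub: "{-a..a} \<subseteq> {-d..d}" using s by (auto simp: a_def \<rho>_def)
    let ?N = "nj i"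
    define R where "R t = Pf d u t - Lz * t^(?N + 1)" for t
    have "\<bar>R s / s^?N\<bar> \<le> r * \<bar>s\<bar>"
    proof (rule psi_gen[where g="\<lambda>t. hf d u t - hf d u 0" and d=a])
      fix \<tau> assume tau: "\<tau> \<in> {-a..a}"
      have "(R has_real_derivative \<tau>^?N * hf d u \<tau> - Lz * (real (?N + 1) * \<tau> ^ (?N + 1 - Suc 0))) (at \<tau> within {-a..a})"
        unfolding R_def[abs_def]
        by (intro DERIV_diff DERIV_cmult DERIV_pow DERIV_subset[OF Pf_deriv sub]) (use tau sub in auto)
      moreover have "\<tau>^?N * hf d u \<tau> - Lz * (real (?N + 1) * \<tau> ^ (?N + 1 - Suc 0)) = \<tau>^?N * (hf d u \<tau> - hf d u 0)"
        by (simp add: Lz_def field_simps)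
      ultimately show "(R has_real_derivative \<tau>^?N * (hf d u \<tau> - hf d u 0)) (at \<tau> within {-a..a})" by simp
      have "\<tau> \<in> {-d..d}" using tau sub by auto
      moreover have "dist \<tau> 0 < \<rho>0" using tau s by (auto simp: a_def \<rho>_def dist_real_def)
      ultimately show "\<bar>hf d u \<tau> - hf d u 0\<bar> \<le> r" using h\<rho> by (force simp: dist_real_def)
    next
      show "R 0 = 0" by (simp add: R_def)
      show "s \<in> {-a..a}" by (auto simp: a_def)
    qed
    moreover have "u s / s - Lz = R s / s^?N / s"
      using fixp[OF sd] s by (simp add: Psi_def R_def field_simps)
    ultimately have "\<bar>u s / s - Lz\<bar> = \<bar>R s / s^?N\<bar> / \<bar>s\<bar>" "\<bar>R s / s^?N\<bar> \<le> r * \<bar>s\<bar>"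
      by (simp_all add: abs_divide abs_mult)
    thus "\<bar>u s / s - Lz\<bar> \<le> r" using s by (simp add: divide_le_eq mult_ac)
  qed
qed

lemma ratio_tendsto: "((\<lambda>s. u s / s) \<longlongrightarrow> Lz) (at 0)"
  unfolding LIM_eq
proof (intro allI impI)
  fix r :: real assume r: "r > 0"
  obtain \<rho> where \<rho>: "\<rho> > 0" and b: "\<And>s. s \<noteq> 0 \<and> \<bar>s\<bar> < \<rho> \<Longrightarrow> \<bar>u s / s - Lz\<bar> \<le> r/2"
    using ratio_lim[of "r/2"] r by auto
  show "\<exists>s>0. \<forall>x. x \<noteq> 0 \<and> norm (x - 0) < s \<longrightarrow> norm (u x / x - Lz) < r"
  proof (intro exI[of _ \<rho>] conjI allI impI \<rho>)
    fix x :: real assume x: "x \<noteq> 0 \<and> norm (x - 0) < \<rho>"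
    hence "\<bar>u x / x - Lz\<bar> \<le> r/2" using b by auto
    thus "norm (u x / x - Lz) < r" using r by simp
  qed
qed

lemma u_deriv0: "(u has_real_derivative Lz) (at 0)"
  unfolding has_field_derivative_iff using ratio_tendsto by (simp add: u0)

lemma u_deriv: "s \<in> {-d<..<d} \<Longrightarrow> (u has_real_derivative ww s) (at s)"
proof (cases "s = 0")
  case True thus ?thesis using u_deriv0 by (simp add: ww_def)
next
  case False
  assume s: "s \<in> {-d<..<d}"
  let ?N = "nj i"
  have P: "(Pf d u has_real_derivative s^?N * hf d u s) (at s)"
    using Pf_deriv[of s] s at_within_Icc_at[of "-d" s d] by auto
  have Q: "((\<lambda>t. Pf d u t / t^?N) has_real_derivative
       (s^?N * hf d u s * s^?N - Pf d u s * (real ?N * s^(?N - Suc 0))) / (s^?N * s^?N)) (at s)"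
    by (rule DERIV_divide[OF P DERIV_pow]) (use False in simp)
  have Pfs: "Pf d u s = u s * s^?N" using fixp[of s] s False by (simp add: Psi_def)
  have "(s^?N * hf d u s * s^?N - Pf d u s * (real ?N * s^(?N - Suc 0))) / (s^?N * s^?N)
        = (s^?N * hf d u s * s^?N - u s * s^?N * (real ?N * s^?N / s)) / (s^?N * s^?N)"
    by (simp only: Pfs pw_id[OF False])
  also have "\<dots> = hf d u s - real ?N * u s / s" by (rule alg1) (use False in auto)
  also have "\<dots> = ww s" using False by (simp add: ww_def NN_def)
  finally have "(s^?N * hf d u s * s^?N - Pf d u s * (real ?N * s^(?N - Suc 0))) / (s^?N * s^?N) = ww s" .
  with Q have Q': "((\<lambda>t. Pf d u t / t^?N) has_real_derivative ww s) (at s)" by simp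
  show ?thesis
    by (rule has_field_derivative_transform_within_open[OF Q' _ s]) (use fixp in \<open>auto simp: Psi_def\<close>)
qed

lemma ww_cont: "continuous_on {-d<..<d} ww"
proof (rule continuous_at_imp_continuous_on, intro ballI)
  fix s assume s: "s \<in> {-d<..<d}"
  show "isCont ww s"
  proof (cases "s = 0")
    case True
    have "((\<lambda>t. hf d u t - NN * (u t / t)) \<longlongrightarrow> hf d u 0 - NN * Lz) (at 0)"
      using h_isCont[of 0] gd by (intro tendsto_intros ratio_tendsto) (auto simp: isCont_def)
    moreover have "hf d u 0 - NN * Lz = Lz" by (simp add: Lz_def NN_def field_simps)
    ultimately have "((\<lambda>t. hf d u t - NN * (u t / t)) \<longlongrightarrow> Lz) (at 0)" by simp
    hence "(ww \<longlongrightarrow> Lz) (at 0)"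
      by (rule Lim_transform_eventually) (auto simp: eventually_at_filter ww_def)
    thus ?thesis using True by (simp add: isCont_def ww_def)
  next
    case False
    have "continuous (at s) (\<lambda>t. hf d u t - NN * u t / t)"
      using h_isCont[OF s] u_isCont[OF s] False by (intro continuous_intros) auto
    thus ?thesis
    proof (rule continuous_transform_within[where \<delta>="\<bar>s\<bar>"])
      show "0 < \<bar>s\<bar>" using False by simp
      fix x' assume "dist x' s < \<bar>s\<bar>"
      hence "x' \<noteq> 0" by (auto simp: dist_real_def)
      thus "hf d u x' - NN * u x' / x' = ww x'" by (simp add: ww_def)
    qed simp
  qed
qed

definition "xs s = Xf d u s *\<^sub>R ee + Yf d u s *\<^sub>R EE"

lemma x_deriv: "s \<in> {-d<..<d} \<Longrightarrow> (xs has_vector_derivative evec (th0 + u s)) (at s)"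
proof -
  assume s: "s \<in> {-d<..<d}"
  have X: "(Xf d u has_real_derivative - sin (u s)) (at s)"
    using X_deriv[of s] s at_within_Icc_at[of "-d" s d] by auto
  have Y: "(Yf d u has_real_derivative cos (u s)) (at s)"
    using Y_deriv[of s] s at_within_Icc_at[of "-d" s d] by auto
  have "(xs has_vector_derivative (Xf d u s *\<^sub>R 0 + (- sin (u s)) *\<^sub>R ee) + (Yf d u s *\<^sub>R 0 + cos (u s) *\<^sub>R EE)) (at s)"
    unfolding xs_def[abs_def]
    by (intro has_vector_derivative_add has_vector_derivative_scaleR X Y has_vector_derivative_const)
  thus ?thesis by (simp add: th0_def evec_rot ee_def EE_def)
qed

lemma v_deriv: "s \<in> {-d<..<d} \<Longrightarrow> ((\<lambda>s. evec (th0 + u s)) has_vector_derivative ww s *\<^sub>R perp (evec (th0 + u s))) (at s)"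
proof -
  assume s: "s \<in> {-d<..<d}"
  have c: "((\<lambda>t. cos (th0 + u t)) has_real_derivative - sin (th0 + u s) * (0 + ww s)) (at s)"
    by (intro DERIV_fun_cos DERIV_add DERIV_const u_deriv s)
  have sn: "((\<lambda>t. sin (th0 + u t)) has_real_derivative cos (th0 + u s) * (0 + ww s)) (at s)"
    by (intro DERIV_fun_sin DERIV_add DERIV_const u_deriv s)
  have "((\<lambda>t. (cos (th0 + u t), sin (th0 + u t))) has_vector_derivative
        (- sin (th0 + u s) * (0 + ww s), cos (th0 + u s) * (0 + ww s))) (at s)"
    using c sn by (intro has_vector_derivative_Pair) (auto simp: has_real_derivative_iff_has_vector_derivative)
  thus ?thesis by (simp add: evec_def perp_def algebra_simps)
qed

lemma evu_cont: "continuous_on {-d<..<d} (\<lambda>s. evec (th0 + u s))"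
  unfolding evec_def
  by (intro continuous_intros continuous_on_subset[OF cu]) auto

lemma peri: "perp (evec (\<phi> i)) \<bullet> xs s = Yf d u s"
proof -
  have "perp (evec (\<phi> i)) = EE" by (simp add: EE_def ee_def)
  thus ?thesis by (simp add: xs_def inner_add_right)
qed

lemma den_nz:
  assumes s: "s \<in> {-d..d}" and s0: "s \<noteq> 0" and j: "j \<in> J"
  shows "perp (evec (\<phi> j)) \<bullet> xs s \<noteq> 0"
proof (cases "j = i")
  case True thus ?thesis using peri Y_nz[OF s s0] by simp
next
  case False
  hence "j \<in> J - {i}" using j by simp
  from den_bound[OF this reg_XY[OF s]] mm_pos
  show ?thesis unfolding xs_def by linarith
qed

lemma ti: "evec (\<phi> i) \<bullet> evec (th0 + a) = - sin a"
proof -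
  have e: "\<phi> i + pi / 2 + a - \<phi> i = a + pi/2" by simp
  show ?thesis unfolding evec_inner th0_def e by (simp add: cos_add)
qed

lemma sumeq:
  "(\<Sum>j\<in>J. real (nj j) * (evec (\<phi> j) \<bullet> evec (th0 + u s)) / (perp (evec (\<phi> j)) \<bullet> xs s))
      = NN * (- sin (u s)) / Yf d u s + Gs (Xf d u s) (Yf d u s) (u s)"
proof -
  have "(\<Sum>j\<in>J. real (nj j) * (evec (\<phi> j) \<bullet> evec (th0 + u s)) / (perp (evec (\<phi> j)) \<bullet> xs s))
     = real (nj i) * (evec (\<phi> i) \<bullet> evec (th0 + u s)) / (perp (evec (\<phi> i)) \<bullet> xs s)
       + (\<Sum>j\<in>J - {i}. real (nj j) * (evec (\<phi> j) \<bullet> evec (th0 + u s)) / (perp (evec (\<phi> j)) \<bullet> xs s))"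
    by (rule sum.remove[OF finJ iJ])
  also have "real (nj i) * (evec (\<phi> i) \<bullet> evec (th0 + u s)) / (perp (evec (\<phi> i)) \<bullet> xs s) = NN * (- sin (u s)) / Yf d u s"
    by (simp only: ti peri NN_def)
  also have "(\<Sum>j\<in>J - {i}. real (nj j) * (evec (\<phi> j) \<bullet> evec (th0 + u s)) / (perp (evec (\<phi> j)) \<bullet> xs s))
      = Gs (Xf d u s) (Yf d u s) (u s)" by (simp only: Gs_def xs_def)
  finally show ?thesis .
qed

lemma ode_eq:
  assumes s0: "s \<noteq> 0"
  shows "- ww s + (NN * (- sin (u s)) / Yf d u s + Gs (Xf d u s) (Yf d u s) (u s)) = (real n - 1) * H s"
proof -
  have w: "ww s = - NN * (sin (u s) / Yf d u s - u s / s) + (Gs (Xf d u s) (Yf d u s) (u s) - (real n - 1) * H s) - NN * (u s / s)"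
    using s0 by (simp add: ww_def hf_def Qf_def fF_def)
  have m: "NN * (- sin (u s)) / Yf d u s = - (NN * (sin (u s) / Yf d u s))" by simp
  show ?thesis unfolding w m by (simp add: algebra_simps)
qed

end

context fp begin

lemma local_solution: "is_local_solution J \<phi> nj n H i x0 d xs"
  unfolding is_local_solution_def
proof (intro conjI)
  show "0 < d" using gd by simp
  have "xs 0 = t0 *\<^sub>R ee" by (simp add: xs_def)
  thus "xs 0 = x0" using x0_eq by simp
  let ?v = "\<lambda>s. evec (th0 + u s)" and ?a = "\<lambda>s. ww s *\<^sub>R perp (evec (th0 + u s))"
  show "\<exists>x' x''. (\<forall>s\<in>{-d<..<d}. (xs has_vector_derivative x' s) (at s) \<and> (x' has_vector_derivative x'' s) (at s)) \<and>
        continuous_on {-d<..<d} x'' \<and>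
        x' 0 = evec (\<phi> i + pi / 2) \<and>
        (\<forall>s\<in>{-d<..<d}. (norm (x' s))\<^sup>2 = 1) \<and>
        (\<forall>s\<in>{-d<..<d}. s \<noteq> 0 \<longrightarrow>
           (\<forall>j\<in>J. perp (evec (\<phi> j)) \<bullet> xs s \<noteq> 0) \<and>
           perp (x'' s) \<bullet> x' s
             + (\<Sum>j\<in>J. real (nj j) * (evec (\<phi> j) \<bullet> x' s) / (perp (evec (\<phi> j)) \<bullet> xs s))
             = (real n - 1) * H s)"
  proof (rule exI[of _ ?v], rule exI[of _ ?a], intro conjI ballI impI)
    fix s assume s: "s \<in> {-d<..<d}"
    show "(xs has_vector_derivative ?v s) (at s)" by (rule x_deriv[OF s])
    show "(?v has_vector_derivative ?a s) (at s)" by (rule v_deriv[OF s])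
    show "(norm (?v s))\<^sup>2 = 1" by simp
  next
    show "continuous_on {-d<..<d} ?a"
      unfolding perp_def by (intro continuous_intros ww_cont evu_cont)
    show "evec (th0 + u 0) = evec (\<phi> i + pi / 2)" by (simp add: u0 th0_def)
  next
    fix s assume s: "s \<in> {-d<..<d}" and s0: "s \<noteq> 0"
    have sd: "s \<in> {-d..d}" using s by auto
    show "perp (evec (\<phi> j)) \<bullet> xs s \<noteq> 0" if "j \<in> J" for j using den_nz[OF sd s0 that] .
    have lhs1: "perp (?a s) \<bullet> ?v s = - ww s"
      by (simp add: perp_scaleR dot_square_norm)
    show "perp (?a s) \<bullet> ?v s + (\<Sum>j\<in>J. real (nj j) * (evec (\<phi> j) \<bullet> ?v s) / (perp (evec (\<phi> j)) \<bullet> xs s))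
          = (real n - 1) * H s"
      unfolding lhs1 sumeq by (rule ode_eq[OF s0])
  qed
qed

end


lemma evec_chain:
  assumes "(f has_real_derivative f') (at s)"
  shows "((\<lambda>s. evec (f s)) has_vector_derivative f' *\<^sub>R perp (evec (f s))) (at s)"
proof -
  have c: "((\<lambda>t. cos (f t)) has_real_derivative - sin (f s) * f') (at s)"
    by (rule DERIV_fun_cos[OF assms])
  have sn: "((\<lambda>t. sin (f t)) has_real_derivative cos (f s) * f') (at s)"
    by (rule DERIV_fun_sin[OF assms])
  have "((\<lambda>t. (cos (f t), sin (f t))) has_vector_derivative (- sin (f s) * f', cos (f s) * f')) (at s)"
    using c sn by (intro has_vector_derivative_Pair) (auto simp: has_real_derivative_iff_has_vector_derivative)
  thus ?thesis by (simp add: evec_def perp_def algebra_simps)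
qed

lemma inner_deriv:
  fixes f g :: "real \<Rightarrow> real \<times> real"
  assumes "(f has_vector_derivative f') (at s)" "(g has_vector_derivative g') (at s)"
  shows "((\<lambda>t. f t \<bullet> g t) has_real_derivative f s \<bullet> g' + f' \<bullet> g s) (at s)"
  using bounded_bilinear.has_vector_derivative[OF bounded_bilinear_inner assms]
  by (simp add: has_real_derivative_iff_has_vector_derivative)

lemma unit_eq:
  fixes v w :: "real \<times> real"
  assumes "norm v = 1" "norm w = 1" "v \<bullet> w = 1"
  shows "v = w"
proof -
  have "(v - w) \<bullet> (v - w) = v \<bullet> v - 2 * (v \<bullet> w) + w \<bullet> w"
    by (simp add: inner_diff_left inner_diff_right inner_commute)
  also have "\<dots> = 0" using assms by (simp add: dot_square_norm)
  finally show ?thesis by simp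
qed

context ctx begin

lemma ti': "evec (\<phi> i) \<bullet> evec (th0 + a) = - sin a"
proof -
  have e: "\<phi> i + pi / 2 + a - \<phi> i = a + pi/2" by simp
  show ?thesis unfolding evec_inner th0_def e by (simp add: cos_add)
qed

lemma tEE: "EE \<bullet> evec (th0 + a) = cos a"
proof -
  have e: "\<phi> i + pi / 2 + a - (\<phi> i + pi/2) = a" by simp
  show ?thesis unfolding EE_def ee_def perp_evec evec_inner th0_def e ..
qed

lemma sumeq_gen:
  "(\<Sum>j\<in>J. real (nj j) * (evec (\<phi> j) \<bullet> evec (th0 + a)) / (perp (evec (\<phi> j)) \<bullet> (X *\<^sub>R ee + Y *\<^sub>R EE)))
      = NN * (- sin a) / Y + Gs X Y a"
proof -
  have peri: "perp (evec (\<phi> i)) \<bullet> (X *\<^sub>R ee + Y *\<^sub>R EE) = Y"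
  proof -
    have "perp (evec (\<phi> i)) = EE" by (simp add: EE_def ee_def)
    thus ?thesis by (simp add: inner_add_right)
  qed
  have "(\<Sum>j\<in>J. real (nj j) * (evec (\<phi> j) \<bullet> evec (th0 + a)) / (perp (evec (\<phi> j)) \<bullet> (X *\<^sub>R ee + Y *\<^sub>R EE)))
     = real (nj i) * (evec (\<phi> i) \<bullet> evec (th0 + a)) / (perp (evec (\<phi> i)) \<bullet> (X *\<^sub>R ee + Y *\<^sub>R EE))
       + (\<Sum>j\<in>J - {i}. real (nj j) * (evec (\<phi> j) \<bullet> evec (th0 + a)) / (perp (evec (\<phi> j)) \<bullet> (X *\<^sub>R ee + Y *\<^sub>R EE)))"
    by (rule sum.remove[OF finJ iJ])
  also have "real (nj i) * (evec (\<phi> i) \<bullet> evec (th0 + a)) / (perp (evec (\<phi> i)) \<bullet> (X *\<^sub>R ee + Y *\<^sub>R EE)) = NN * (- sin a) / Y"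
    by (simp only: ti' peri NN_def)
  also have "(\<Sum>j\<in>J - {i}. real (nj j) * (evec (\<phi> j) \<bullet> evec (th0 + a)) / (perp (evec (\<phi> j)) \<bullet> (X *\<^sub>R ee + Y *\<^sub>R EE)))
      = Gs X Y a" by (simp only: Gs_def)
  finally show ?thesis .
qed

lemma recover:
  assumes sol: "is_local_solution J \<phi> nj n H i x0 \<epsilon> x"
  shows "\<exists>e>0. \<exists>B\<ge>0. \<exists>U. continuous_on {-e..e} U \<and> (\<forall>t\<in>{-e..e}. \<bar>U t\<bar> \<le> B * \<bar>t\<bar>) \<and>
     (\<forall>d K. good K d \<and> d < e \<and> B \<le> K \<longrightarrow>
        (\<forall>s\<in>{-d..d}. U s = Psi d U s \<and> x s = Xf d U s *\<^sub>R ee + Yf d U s *\<^sub>R EE))"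
proof -
  from sol obtain v a where ep: "\<epsilon> > 0" and x0': "x 0 = x0"
    and der: "\<And>s. s \<in> {-\<epsilon><..<\<epsilon>} \<Longrightarrow> (x has_vector_derivative v s) (at s) \<and> (v has_vector_derivative a s) (at s)"
    and conta: "continuous_on {-\<epsilon><..<\<epsilon>} a"
    and v0: "v 0 = evec (\<phi> i + pi / 2)"
    and nv: "\<And>s. s \<in> {-\<epsilon><..<\<epsilon>} \<Longrightarrow> (norm (v s))\<^sup>2 = 1"
    and ode: "\<And>s. s \<in> {-\<epsilon><..<\<epsilon>} \<Longrightarrow> s \<noteq> 0 \<Longrightarrow>
           perp (a s) \<bullet> v s + (\<Sum>j\<in>J. real (nj j) * (evec (\<phi> j) \<bullet> v s) / (perp (evec (\<phi> j)) \<bullet> x s)) = (real n - 1) * H s"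
    unfolding is_local_solution_def by blast
  define e where "e = \<epsilon> / 2"
  have e: "e > 0" "e < \<epsilon>" using ep by (auto simp: e_def)
  have Isub: "{-e..e} \<subseteq> {-\<epsilon><..<\<epsilon>}" using e by auto
  have nv1: "\<And>s. s \<in> {-\<epsilon><..<\<epsilon>} \<Longrightarrow> norm (v s) = 1"
    using nv by (metis abs_norm_cancel power2_eq_1_iff real_sqrt_abs real_sqrt_one)
  have contv: "continuous_on {-\<epsilon><..<\<epsilon>} v"
    by (rule continuous_at_imp_continuous_on) (use der has_vector_derivative_continuous in blast)
  define c where "c s = perp (v s) \<bullet> a s" for s
  have contc: "continuous_on {-\<epsilon><..<\<epsilon>} c"
    unfolding c_def[abs_def] perp_def by (intro continuous_intros contv conta)
  have contcI: "continuous_on {-e..e} c" by (rule continuous_on_subset[OF contc Isub])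
  have va: "v s \<bullet> a s = 0" if s: "s \<in> {-\<epsilon><..<\<epsilon>}" for s
  proof -
    have d1: "((\<lambda>t. v t \<bullet> v t) has_real_derivative v s \<bullet> a s + a s \<bullet> v s) (at s)"
      using der[OF s] by (intro inner_deriv) auto
    have "((\<lambda>t. 1) has_real_derivative 0) (at s)" by simp
    hence d2: "((\<lambda>t. v t \<bullet> v t) has_real_derivative 0) (at s)"
      by (rule has_field_derivative_transform_within_open[where S="{-\<epsilon><..<\<epsilon>}"])
         (use s nv in \<open>auto simp: dot_square_norm\<close>)
    from DERIV_unique[OF d1 d2] show ?thesis by (simp add: inner_commute)
  qed
  have aeq: "a s = c s *\<^sub>R perp (v s)" if s: "s \<in> {-\<epsilon><..<\<epsilon>}" for s
    using decomp_unit[OF nv1[OF s], of "a s"] va[OF s] by (simp add: c_def)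
  define U where "U = Ig e c"
  have U_at: "(U has_real_derivative c s) (at s)" if "s \<in> {-e<..<e}" for s
    unfolding U_def by (rule Ig_deriv_at[OF contcI that])
  have U_within: "(U has_real_derivative c s) (at s within {-e..e})" if "s \<in> {-e..e}" for s
    unfolding U_def by (rule Ig_deriv[OF contcI that])
  have contU: "continuous_on {-e..e} U" unfolding U_def by (rule Ig_cont[OF contcI])
  have U0: "U 0 = 0" by (simp add: U_def)
  obtain B where B: "B \<ge> 0" "\<And>t. t \<in> {-e..e} \<Longrightarrow> \<bar>c t\<bar> \<le> B"
  proof -
    have "continuous_on {-e..e} (\<lambda>t. \<bar>c t\<bar>)" by (intro continuous_intros contcI)
    then obtain tm where "tm \<in> {-e..e}" "\<And>t. t \<in> {-e..e} \<Longrightarrow> \<bar>c t\<bar> \<le> \<bar>c tm\<bar>"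
      using continuous_attains_sup[of "{-e..e}" "\<lambda>t. \<bar>c t\<bar>"] e by auto
    thus ?thesis using that[of "\<bar>c tm\<bar>"] by auto
  qed
  have Ubd: "\<bar>U t\<bar> \<le> B * \<bar>t\<bar>" if t: "t \<in> {-e..e}" for t
    using seg_bound[OF U_within t, of B] B(2) seg_mem2[OF t] U0 by auto
  have vU: "v s = evec (th0 + U s)" if s: "s \<in> {-e<..<e}" for s
  proof -
    define g where "g t = v t \<bullet> evec (th0 + U t)" for t
    have gd: "(g has_real_derivative 0) (at t within {-e<..<e})" if t: "t \<in> {-e<..<e}" for t
    proof -
      have te: "t \<in> {-\<epsilon><..<\<epsilon>}" using t e by auto
      have Ud: "((\<lambda>t. th0 + U t) has_real_derivative c t) (at t)"
        using DERIV_add[OF DERIV_const U_at[OF t], of th0] by simp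
      have "(g has_real_derivative v t \<bullet> (c t *\<^sub>R perp (evec (th0 + U t))) + a t \<bullet> evec (th0 + U t)) (at t)"
        unfolding g_def[abs_def]
        by (rule inner_deriv[OF der[OF te, THEN conjunct2] evec_chain[OF Ud]])
      moreover have "v t \<bullet> (c t *\<^sub>R perp (evec (th0 + U t))) + a t \<bullet> evec (th0 + U t) = 0"
        using aeq[OF te] by (simp add: perp_inner_swap[of "v t"] inner_commute)
      ultimately show ?thesis by (simp add: has_field_derivative_at_within)
    qed
    obtain C where C: "\<And>t. t \<in> {-e<..<e} \<Longrightarrow> g t = C"
      using has_field_derivative_zero_constant[of "{-e<..<e}" g] gd by auto
    have "g 0 = 1" by (simp add: g_def v0 U0 th0_def dot_square_norm)
    hence "g s = 1" using C[OF s] C[of 0] e by auto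
    moreover have "norm (v s) = 1" using nv1 s e by auto
    ultimately show ?thesis by (intro unit_eq) (auto simp: g_def)
  qed
  have part: "\<forall>d K. good K d \<and> d < e \<and> B \<le> K \<longrightarrow>
        (\<forall>s\<in>{-d..d}. U s = Psi d U s \<and> x s = Xf d U s *\<^sub>R ee + Yf d U s *\<^sub>R EE)"
  proof (intro allI impI ballI)
    fix d K s assume dK: "good K d \<and> d < e \<and> B \<le> K" and s: "s \<in> {-d..d}"
    have g: "good K d" using dK by simp
    have d0: "0 < d" using g by (simp add: good_def)
    have dsub: "{-d..d} \<subseteq> {-e<..<e}" using dK by auto
    have contUd: "continuous_on {-d..d} U" by (rule continuous_on_subset[OF contU]) (use dsub dK in auto)
    have inSU: "inS K d U" unfolding inS_def
    proof
      fix t assume t: "t \<in> {-d..d}"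
      have "\<bar>U t\<bar> \<le> B * \<bar>t\<bar>" using Ubd t dsub by auto
      also have "\<dots> \<le> K * \<bar>t\<bar>" using dK by (intro mult_right_mono) auto
      finally show "\<bar>U t\<bar> \<le> K * \<bar>t\<bar>" .
    qed
    interpret A: est J \<phi> nj n H i x0 K d U by (rule mk_est[OF g contUd inSU])
    have ineps: "t \<in> {-\<epsilon><..<\<epsilon>}" if "t \<in> {-d..d}" for t using that dsub e by auto
    have ine: "t \<in> {-e<..<e}" if "t \<in> {-d..d}" for t using that dsub by auto
    have Xeq: "ee \<bullet> x t = Xf d U t" if t: "t \<in> {-d..d}" for t
    proof -
      define f where "f t = ee \<bullet> x t - Xf d U t" for t
      have "(f has_real_derivative 0) (at \<tau> within {-d..d})" if tau: "\<tau> \<in> {-d..d}" for \<tau>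
      proof -
        have xd: "((\<lambda>t. ee \<bullet> x t) has_real_derivative ee \<bullet> v \<tau>) (at \<tau> within {-d..d})"
          using bounded_linear.has_vector_derivative[OF bounded_linear_inner_right
                 has_vector_derivative_at_within[OF der[OF ineps[OF tau], THEN conjunct1]]]
          by (simp add: has_real_derivative_iff_has_vector_derivative)
        have "(f has_real_derivative ee \<bullet> v \<tau> - - sin (U \<tau>)) (at \<tau> within {-d..d})"
          unfolding f_def[abs_def] by (intro DERIV_diff xd A.X_deriv tau)
        moreover have "ee \<bullet> v \<tau> - - sin (U \<tau>) = 0"
          using vU[OF ine[OF tau]] ti'[of "U \<tau>"] by (simp add: ee_def)
        ultimately show ?thesis by simp
      qed
      then obtain C where "\<And>t. t \<in> {-d..d} \<Longrightarrow> f t = C"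
        using has_field_derivative_zero_constant[of "{-d..d}" f] by blast
      moreover have "f 0 = 0" by (simp add: f_def x0' t0_def)
      moreover have "(0::real) \<in> {-d..d}" using d0 by simp
      ultimately have "f t = 0" using t by metis
      thus ?thesis by (simp add: f_def)
    qed
    have Yeq: "EE \<bullet> x t = Yf d U t" if t: "t \<in> {-d..d}" for t
    proof -
      define f where "f t = EE \<bullet> x t - Yf d U t" for t
      have "(f has_real_derivative 0) (at \<tau> within {-d..d})" if tau: "\<tau> \<in> {-d..d}" for \<tau>
      proof -
        have xd: "((\<lambda>t. EE \<bullet> x t) has_real_derivative EE \<bullet> v \<tau>) (at \<tau> within {-d..d})"
          using bounded_linear.has_vector_derivative[OF bounded_linear_inner_right
                 has_vector_derivative_at_within[OF der[OF ineps[OF tau], THEN conjunct1]]]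
          by (simp add: has_real_derivative_iff_has_vector_derivative)
        have "(f has_real_derivative EE \<bullet> v \<tau> - cos (U \<tau>)) (at \<tau> within {-d..d})"
          unfolding f_def[abs_def] by (intro DERIV_diff xd A.Y_deriv tau)
        moreover have "EE \<bullet> v \<tau> - cos (U \<tau>) = 0"
          using vU[OF ine[OF tau]] tEE[of "U \<tau>"] by simp
        ultimately show ?thesis by simp
      qed
      then obtain C where "\<And>t. t \<in> {-d..d} \<Longrightarrow> f t = C"
        using has_field_derivative_zero_constant[of "{-d..d}" f] by blast
      moreover have "f 0 = 0" using online by (simp add: f_def x0' EE_def ee_def)
      moreover have "(0::real) \<in> {-d..d}" using d0 by simp
      ultimately have "f t = 0" using t by metis
      thus ?thesis by (simp add: f_def)
    qed
    have xeq: "x t = Xf d U t *\<^sub>R ee + Yf d U t *\<^sub>R EE" if t: "t \<in> {-d..d}" for t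
      using decomp[of "x t"] Xeq[OF t] Yeq[OF t] by simp
    have ceq: "c t = hf d U t - NN * U t / t" if t: "t \<in> {-d..d}" and t0': "t \<noteq> 0" for t
    proof -
      have o: "perp (a t) \<bullet> v t + (\<Sum>j\<in>J. real (nj j) * (evec (\<phi> j) \<bullet> v t) / (perp (evec (\<phi> j)) \<bullet> x t)) = (real n - 1) * H t"
        by (rule ode[OF ineps[OF t] t0'])
      have p: "perp (a t) \<bullet> v t = - c t"
        using aeq[OF ineps[OF t]] nv1[OF ineps[OF t]] by (simp add: perp_scaleR dot_square_norm)
      have sm: "(\<Sum>j\<in>J. real (nj j) * (evec (\<phi> j) \<bullet> v t) / (perp (evec (\<phi> j)) \<bullet> x t))
                 = NN * (- sin (U t)) / Yf d U t + Gs (Xf d U t) (Yf d U t) (U t)"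
        unfolding vU[OF ine[OF t]] xeq[OF t] by (rule sumeq_gen)
      have m: "NN * (- sin (U t)) / Yf d U t = - (NN * (sin (U t) / Yf d U t))" by simp
      have "c t = NN * (- sin (U t)) / Yf d U t + Gs (Xf d U t) (Yf d U t) (U t) - (real n - 1) * H t"
        using o unfolding p sm by linarith
      thus ?thesis using t0' unfolding m by (simp add: hf_def Qf_def fF_def algebra_simps)
    qed
    define Z where "Z t = t ^ nj i * U t - Pf d U t" for t
    have Zd: "(Z has_real_derivative 0) (at t)" if t: "t \<in> {-d<..<d}" and t0': "t \<noteq> 0" for t
    proof -
      have td: "t \<in> {-d..d}" using t by auto
      have P: "(Pf d U has_real_derivative t ^ nj i * hf d U t) (at t)"
        using A.Pf_deriv[OF td] t at_within_Icc_at[of "-d" t d] by auto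
      have "(Z has_real_derivative (real (nj i) * t ^ (nj i - Suc 0)) * U t + c t * t ^ nj i - t ^ nj i * hf d U t) (at t)"
        unfolding Z_def[abs_def] by (intro DERIV_diff DERIV_mult DERIV_pow U_at ine td P)
      moreover have "(real (nj i) * t ^ (nj i - Suc 0)) * U t + c t * t ^ nj i - t ^ nj i * hf d U t = 0"
        unfolding ceq[OF td t0'] pw_id[OF t0'] using t0' by (simp add: NN_def field_simps)
      ultimately show ?thesis by simp
    qed
    have contZ: "continuous_on {-d..d} Z"
      unfolding Z_def[abs_def] by (intro continuous_intros contUd A.Pf_cont)
    have Zs: "Z s = 0"
    proof (cases "s = 0")
      case True thus ?thesis by (cases "nj i") (auto simp: Z_def U0)
    next
      case False
      have Z0: "Z 0 = 0" by (cases "nj i") (auto simp: Z_def U0)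
      show ?thesis
      proof (cases "s > 0")
        case True
        have "Z s = Z 0"
          by (rule DERIV_isconst_end[OF True continuous_on_subset[OF contZ]]) (use s in \<open>auto intro!: Zd\<close>)
        thus ?thesis using Z0 by simp
      next
        case False
        hence sn: "s < 0" using \<open>s \<noteq> 0\<close> by simp
        have "Z 0 = Z s"
          by (rule DERIV_isconst_end[OF sn continuous_on_subset[OF contZ]]) (use s in \<open>auto intro!: Zd\<close>)
        thus ?thesis using Z0 by simp
      qed
    qed
    have "U s = Psi d U s"
    proof (cases "s = 0")
      case True thus ?thesis using U0 by simp
    next
      case False thus ?thesis using Zs by (simp add: Z_def Psi_def field_simps)
    qed
    thus "U s = Psi d U s \<and> x s = Xf d U s *\<^sub>R ee + Yf d U s *\<^sub>R EE" using xeq[OF s] by simp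
  qed
  show ?thesis using e B(1) contU Ubd part by blast
qed

end


lemma perp_evec_inner: "perp (evec a) \<bullet> evec b = sin (b - a)"
  by (simp add: evec_def perp_def inner_prod_def sin_diff algebra_simps)

lemma sin_frac_nz:
  fixes i j :: int and k :: real
  assumes k: "k > 0" and ij: "i \<noteq> j" and lt0: "\<bar>real_of_int i - real_of_int j\<bar> < k"
  shows "sin (real_of_int i * pi / k - real_of_int j * pi / k) \<noteq> 0"
proof -
  define m where "m = real_of_int i - real_of_int j"
  have eq: "real_of_int i * pi / k - real_of_int j * pi / k = m * pi / k"
    unfolding m_def by (simp add: diff_divide_distrib left_diff_distrib)
  have m0: "m \<noteq> 0" using ij by (simp add: m_def)
  have mk: "\<bar>m\<bar> < k" using lt0 by (simp add: m_def)
  have "\<bar>m\<bar> * pi < k * pi" using mk by (simp add: pi_gt_zero)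
  hence lt: "\<bar>m\<bar> * pi / k < pi" using k by (simp add: divide_less_eq mult.commute)
  show ?thesis
  proof (cases "m > 0")
    case True
    hence a: "0 < m * pi / k" using k by simp
    have "\<bar>m\<bar> = m" using True by simp
    hence b: "m * pi / k < pi" using lt by simp
    have "sin (m * pi / k) > 0" by (rule sin_gt_zero[OF a b])
    thus ?thesis unfolding eq by simp
  next
    case False
    hence mn: "m < 0" using m0 by simp
    have "(- m) * pi / k > 0" using mn k by (intro divide_pos_pos mult_pos_pos) auto
    hence a: "0 < - (m * pi / k)" by simp
    have "\<bar>m\<bar> = - m" using mn by simp
    hence b: "- (m * pi / k) < pi" using lt by simp
    have "sin (- (m * pi / k)) > 0" by (rule sin_gt_zero[OF a b])
    hence "sin (m * pi / k) < 0" by simp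
    thus ?thesis unfolding eq by simp
  qed
qed

lemma type_facts:
  assumes td: "type_data J \<phi> nj n" and i: "i \<in> J"
  shows "finite J" "\<And>j. j \<in> J \<Longrightarrow> j \<noteq> i \<Longrightarrow> perp (evec (\<phi> j)) \<bullet> evec (\<phi> i) \<noteq> 0"
proof -
  note D = td[unfolded type_data_def, THEN conjunct2]
  show "finite J" using D
    apply (elim disjE)
    subgoal premises p
    proof -
      have "J = {0}" using p by blast
      thus ?thesis by simp
    qed
    subgoal premises p
    proof -
      have "J = {0, 1}" using p by blast
      thus ?thesis by simp
    qed
    subgoal premises p
    proof -
      have "J = {-1, 0, 1}" using p by blast
      thus ?thesis by simp
    qed
    subgoal premises p
    proof -
      have "J = {-1, 0, 1, 2}" using p by blast
      thus ?thesis by simp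
    qed
    subgoal premises p
    proof -
      have "J = {-2..3}" using p by blast
      thus ?thesis by simp
    qed
    done
  fix j assume j: "j \<in> J" and ji: "j \<noteq> i"
  have gen: "perp (evec (\<phi> j)) \<bullet> evec (\<phi> i) \<noteq> 0"
    if "\<phi> i = real_of_int i * pi / k" "\<phi> j = real_of_int j * pi / k" "k > 0" "\<bar>real_of_int i - real_of_int j\<bar> < k" for k
    unfolding perp_evec_inner that(1,2) by (rule sin_frac_nz[OF that(3) _ that(4)]) (use ji in auto)
  show "perp (evec (\<phi> j)) \<bullet> evec (\<phi> i) \<noteq> 0"
    using D
    apply (elim disjE)
    subgoal premises p
    proof -
      have "J = {0}" using p by blast
      thus ?thesis using i j ji by auto
    qed
    subgoal premises p
    proof -
      have J: "J = {0, 1}" "\<phi> 0 = 0" "\<phi> 1 = pi / 2" using p by blast+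
      hence "(i = 0 \<and> j = 1) \<or> (i = 1 \<and> j = 0)" using i j ji by auto
      moreover have "perp (evec (pi/2)) \<bullet> evec 0 \<noteq> 0" "perp (evec 0) \<bullet> evec (pi/2) \<noteq> 0"
        by (simp_all add: perp_evec_inner)
      ultimately show ?thesis using J(2,3) by metis
    qed
    subgoal premises p
    proof -
      have J: "J = {-1, 0, 1}" "\<forall>j\<in>J. \<phi> j = real_of_int j * pi / 3" using p by blast+
      have "\<bar>real_of_int i - real_of_int j\<bar> < 3" using i j J(1) by auto
      thus ?thesis using gen[of 3] J i j by auto
    qed
    subgoal premises p
    proof -
      have J: "J = {-1, 0, 1, 2}" "\<forall>j\<in>J. \<phi> j = real_of_int j * pi / 4" using p by blast+
      have "\<bar>real_of_int i - real_of_int j\<bar> < 4" using i j J(1) by auto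
      thus ?thesis using gen[of 4] J i j by auto
    qed
    subgoal premises p
    proof -
      have J: "J = {-2..3}" "\<forall>j\<in>J. \<phi> j = real_of_int j * pi / 6" using p by blast+
      have "\<bar>i - j\<bar> < 6" using i j J(1) by auto
      hence "\<bar>real_of_int i - real_of_int j\<bar> < 6" by linarith
      thus ?thesis using gen[of 6] J i j by auto
    qed
    done
qed

theorem proposition3p2:
  fixes J :: "int set" and \<phi> :: "int \<Rightarrow> real" and nj :: "int \<Rightarrow> nat" and n :: nat
    and H :: "real \<Rightarrow> real" and i :: int and x0 :: "real \<times> real"
  assumes "type_data J \<phi> nj n"
    and "continuous_on UNIV H"
    and "i \<in> J"
    and "perp (evec (\<phi> i)) \<bullet> x0 = 0"
    and "x0 \<noteq> 0"
  shows "(\<exists>\<epsilon> x. is_local_solution J \<phi> nj n H i x0 \<epsilon> x) \<and>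
         (\<forall>\<epsilon>1 x1 \<epsilon>2 x2. is_local_solution J \<phi> nj n H i x0 \<epsilon>1 x1 \<and>
                         is_local_solution J \<phi> nj n H i x0 \<epsilon>2 x2 \<longrightarrow>
            (\<exists>\<delta>>0. \<forall>s\<in>{-\<delta><..<\<delta>}. x1 s = x2 s))"
proof -
  note tf = type_facts[OF assms(1) assms(3)]
  interpret C: ctx J \<phi> nj n H i x0
    by (rule ctx.intro) (use tf assms in auto)
  have ex: "\<exists>\<epsilon> x. is_local_solution J \<phi> nj n H i x0 \<epsilon> x"
  proof -
    define K where "K = 1 + C.F0"
    have K1: "1 \<le> K" using C.F0_nonneg by (simp add: K_def)
    obtain d0 where d0: "d0 > 0" "\<And>d. 0 < d \<and> d \<le> d0 \<Longrightarrow> C.good K d"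
      using C.good_ex[OF K1] by blast
    have g: "C.good K d0" using d0 by auto
    obtain u where u: "continuous_on UNIV u" "C.inS K d0 u" "\<forall>s\<in>{-d0..d0}. u s = C.Psi d0 u s"
      using C.fixpoint_exists[OF g] by (auto simp: K_def)
    have e: "est J \<phi> nj H i x0 K d0 u"
      by (rule C.mk_est[OF g continuous_on_subset[OF u(1)] u(2)]) simp
    interpret F: fp J \<phi> nj n H i x0 K d0 u
      by (rule fp.intro[OF e]) (rule fp_axioms.intro, use u(3) in blast)
    show ?thesis using F.local_solution by blast
  qed
  have un: "\<exists>\<delta>>0. \<forall>s\<in>{-\<delta><..<\<delta>}. x1 s = x2 s"
    if s1: "is_local_solution J \<phi> nj n H i x0 \<epsilon>1 x1" and s2: "is_local_solution J \<phi> nj n H i x0 \<epsilon>2 x2"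
    for \<epsilon>1 x1 \<epsilon>2 x2
  proof -
    obtain e1 B1 U1 where r1: "e1 > 0" "B1 \<ge> 0" "continuous_on {-e1..e1} U1" "\<forall>t\<in>{-e1..e1}. \<bar>U1 t\<bar> \<le> B1 * \<bar>t\<bar>"
      "\<forall>d K. C.good K d \<and> d < e1 \<and> B1 \<le> K \<longrightarrow>
        (\<forall>s\<in>{-d..d}. U1 s = C.Psi d U1 s \<and> x1 s = C.Xf d U1 s *\<^sub>R C.ee + C.Yf d U1 s *\<^sub>R C.EE)"
      using C.recover[OF s1] by blast
    obtain e2 B2 U2 where r2: "e2 > 0" "B2 \<ge> 0" "continuous_on {-e2..e2} U2" "\<forall>t\<in>{-e2..e2}. \<bar>U2 t\<bar> \<le> B2 * \<bar>t\<bar>"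
      "\<forall>d K. C.good K d \<and> d < e2 \<and> B2 \<le> K \<longrightarrow>
        (\<forall>s\<in>{-d..d}. U2 s = C.Psi d U2 s \<and> x2 s = C.Xf d U2 s *\<^sub>R C.ee + C.Yf d U2 s *\<^sub>R C.EE)"
      using C.recover[OF s2] by blast
    define K where "K = max 1 (max B1 B2)"
    have K1: "1 \<le> K" by (simp add: K_def)
    obtain d0 where d0: "d0 > 0" "\<And>d. 0 < d \<and> d \<le> d0 \<Longrightarrow> C.good K d"
      using C.good_ex[OF K1] by blast
    define d where "d = min d0 (min e1 e2 / 2)"
    have dpos: "d > 0" using d0 r1 r2 by (simp add: d_def)
    have g: "C.good K d" using d0(2)[of d] dpos by (simp add: d_def)
    have de1: "d < e1" and de2: "d < e2" using r1 r2 by (auto simp: d_def)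
    have B1K: "B1 \<le> K" and B2K: "B2 \<le> K" by (auto simp: K_def)
    have f1: "\<forall>s\<in>{-d..d}. U1 s = C.Psi d U1 s \<and> x1 s = C.Xf d U1 s *\<^sub>R C.ee + C.Yf d U1 s *\<^sub>R C.EE"
      using r1(5) g de1 B1K by blast
    have f2: "\<forall>s\<in>{-d..d}. U2 s = C.Psi d U2 s \<and> x2 s = C.Xf d U2 s *\<^sub>R C.ee + C.Yf d U2 s *\<^sub>R C.EE"
      using r2(5) g de2 B2K by blast
    have c1: "continuous_on {-d..d} U1" by (rule continuous_on_subset[OF r1(3)]) (use de1 in auto)
    have c2: "continuous_on {-d..d} U2" by (rule continuous_on_subset[OF r2(3)]) (use de2 in auto)
    have i1: "C.inS K d U1" unfolding C.inS_def
    proof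
      fix t assume t: "t \<in> {-d..d}"
      hence "\<bar>U1 t\<bar> \<le> B1 * \<bar>t\<bar>" using r1(4) de1 by auto
      also have "\<dots> \<le> K * \<bar>t\<bar>" using B1K by (intro mult_right_mono) auto
      finally show "\<bar>U1 t\<bar> \<le> K * \<bar>t\<bar>" .
    qed
    have i2: "C.inS K d U2" unfolding C.inS_def
    proof
      fix t assume t: "t \<in> {-d..d}"
      hence "\<bar>U2 t\<bar> \<le> B2 * \<bar>t\<bar>" using r2(4) de2 by auto
      also have "\<dots> \<le> K * \<bar>t\<bar>" using B2K by (intro mult_right_mono) auto
      finally show "\<bar>U2 t\<bar> \<le> K * \<bar>t\<bar>" .
    qed
    have eq: "\<forall>s\<in>{-d..d}. U1 s = U2 s"
      by (rule C.fixpoint_unique[OF g c1 i1 _ c2 i2]) (use f1 f2 in auto)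
    have Ieq: "Ig d (\<lambda>\<tau>. g (U1 \<tau>)) t = Ig d (\<lambda>\<tau>. g (U2 \<tau>)) t" if t: "t \<in> {-d..d}" for t and g :: "real \<Rightarrow> real"
    proof -
      have "integral {-d..t} (\<lambda>\<tau>. g (U1 \<tau>)) = integral {-d..t} (\<lambda>\<tau>. g (U2 \<tau>))"
        by (rule integral_cong) (use eq t in auto)
      moreover have "integral {-d..0} (\<lambda>\<tau>. g (U1 \<tau>)) = integral {-d..0} (\<lambda>\<tau>. g (U2 \<tau>))"
        by (rule integral_cong) (use eq dpos in auto)
      ultimately show ?thesis by (simp add: Ig_def)
    qed
    show ?thesis
    proof (intro exI[of _ d] conjI dpos ballI)
      fix s assume "s \<in> {-d<..<d}"
      hence s: "s \<in> {-d..d}" by auto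
      have "C.Xf d U1 s = C.Xf d U2 s" using Ieq[OF s, of sin] by (simp add: C.Xf_def)
      moreover have "C.Yf d U1 s = C.Yf d U2 s" using Ieq[OF s, of cos] by (simp add: C.Yf_def)
      ultimately show "x1 s = x2 s" using f1 f2 s by auto
    qed
  qed
  show ?thesis
  proof (intro conjI allI impI)
    show "\<exists>\<epsilon> x. is_local_solution J \<phi> nj n H i x0 \<epsilon> x" by (rule ex)
    fix \<epsilon>1 x1 \<epsilon>2 x2
    assume a: "is_local_solution J \<phi> nj n H i x0 \<epsilon>1 x1 \<and> is_local_solution J \<phi> nj n H i x0 \<epsilon>2 x2"
    show "\<exists>\<delta>>0. \<forall>s\<in>{-\<delta><..<\<delta>}. x1 s = x2 s"
      using a by (intro un) auto
  qed
qed


end
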